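(* The category $\mathfrak{B}$ whose objects are Bochvar algebras and whose morphisms are homomorphisms of Bochvar algebras is equivalent to the category $\mathfrak{S}$ whose objects are Bochvar systems and whose morphisms are the Bochvar-system morphisms defined below. The equivalence is given by the functors $\Gamma:\mathfrak{B}\to\mathfrak{S}$ and $\Xi:\mathfrak{S}\to\mathfrak{B}$ described below.
   Context: Let $\mathbf{WK}^e$ be the three-element algebra on $\{0,\tfrac12,1\}$ of type $\langle \wedge,\vee,\neg,J_2,0,1\rangle$ (arities $2,2,1,1,0,0$). Its operations are: - $\neg$ swaps $0$ and $1$ and fixes $\tfrac12$; - $\wedge,\vee$ agree with the two-element Boolean operations on $\{0,1\}$ and return $\tfrac12$ whenever an argument is $\tfrac12$; - $J_2(1)=1$ and $J_2(\tfrac12)=J_2(0)=0$. A Bochvar algebra is a member of the quasivariety $ISP(\mathbf{WK}^e)$. Płonka sums. A semilattice direct system consists of: - a join-semilattice $\langle I,\vee,i_0\rangle$ with least element $i_0$; - pairwise disjoint similar algebras $\mathbf{A}_i$ ($i\in I$), called fibres; - homomorphisms $p_{ij}:\mathbf{A}_i\to\mathbf{A}_j$ for $i\le j$, with $p_{ii}=\mathrm{id}$ and $p_{jk}\circ p_{ij}=p_{ik}$. Its Płonka sum has universe $\bigsqcup_i A_i$. Operations are $g(a_1,\dots,a_n)=g^{\mathbf{A}_k}(p_{i_1k}(a_1),\dots,p_{i_nk}(a_n))$ for $a_m\in A_{i_m}$ and $k=i_1\vee\dots\vee i_n$; constants are taken from $\mathbf{A}_{i_0}$. Every Bochvar algebra's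 $\{\wedge,\vee,\neg,0,1\}$-reduct is canonically (up to isomorphism) a Płonka sum of Boolean algebras, with bottom fibre $\mathbf{A}_{i_0}$. Two elements $a,b$ lie in the same fibre iff $a\wedge(a\vee b)=a$ and $b\wedge(b\vee a)=b$. A Bochvar system is a pair $\langle\mathbf{B},\mathbf{I}\rangle$ where $\mathbf{B}$ is a Boolean algebra and $I\subseteq B$ contains $1$ and is closed under $\wedge$. A morphism $\langle\mathbf{B}_1,\mathbf{I}_1\rangle\to\langle\mathbf{B}_2,\mathbf{I}_2\rangle$ is a Boolean homomorphism $g:\mathbf{B}_1\to\mathbf{B}_2$ with $g(I_1)\subseteq I_2$. The functor $\Gamma$: - On a Bochvar algebra $\mathbf{A}$ with fibres $\mathbf{A}_i$, set $\Gamma(\mathbf{A})=\langle\mathbf{A}_{i_0},K\rangle$ with $K=\{J_2(1^{A_i}):i\in I\}$, where $1^{A_i}$ is the top of fibre $\mathbf{A}_i$. - On a homomorphism $f$, $\Gamma(f)$ is the restriction of $f$ to the bottom fibre. The functor $\Xi$. For a Bochvar system $\langle\mathbf{B},\mathbf{I}\rangle$, write $[i)$ for the principal filter of $\mathbf{B}$ generated by $i$, and $\mathbf{B}/[i)$ for the quotient by the congruence associated to $[i)$. - $\Xi(\langle\mathbf{B},\mathbf{I}\rangle)$ is the unique Bochvar algebra whose involutive-bisemilattice reduct is the Płonka sum of the following system: index semilattice $I$ with the order dual to that of $\mathbf{B}$ (so $1$ is least); fibres $\mathbf{B}/[i)$; maps $p_{ij}(a/[i))=a/[j)$. Its $J_2$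 sends $a/[i)$ to the unique element of the bottom fibre $\mathbf{B}/[1)\cong\mathbf{B}$ lying in $[0,i]$ and congruent to $a$ modulo $[i)$. - On a morphism $g$, $\Xi(g)(a/[i))=g(a)/[g(i))$. *)

theory Defs
  imports Main
begin

datatype wk = WZero | WHalf | WOne

fun wk_neg :: "wk \<Rightarrow> wk" where
  "wk_neg WZero = WOne" | "wk_neg WOne = WZero" | "wk_neg WHalf = WHalf"

definition wk_meet :: "wk \<Rightarrow> wk \<Rightarrow> wk" where
  "wk_meet x y = (if x = WHalf \<or> y = WHalf then WHalf
                  else if x = WOne \<and> y = WOne then WOne else WZero)"

definition wk_join :: "wk \<Rightarrow> wk \<Rightarrow> wk" where
  "wk_join x y = (if x = WHalf \<or> y = WHalf then WHalf
                  else if x = WOne \<or> y = WOne then WOne else WZero)"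

definition wk_J2 :: "wk \<Rightarrow> wk" where
  "wk_J2 x = (if x = WOne then WOne else WZero)"

record 'a balg =
  ba_carrier :: "'a set"
  ba_meet :: "'a \<Rightarrow> 'a \<Rightarrow> 'a"
  ba_join :: "'a \<Rightarrow> 'a \<Rightarrow> 'a"
  ba_neg :: "'a \<Rightarrow> 'a"
  ba_J2 :: "'a \<Rightarrow> 'a"
  ba_zero :: "'a"
  ba_one :: "'a"

definition balg_wf :: "'a balg \<Rightarrow> bool" where
  "balg_wf A \<longleftrightarrow>
     (\<forall>x\<in>ba_carrier A. \<forall>y\<in>ba_carrier A.
        ba_meet A x y \<in> ba_carrier A \<and> ba_join A x y \<in> ba_carrier A) \<and>
     (\<forall>x\<in>ba_carrier A. ba_neg A x \<in> ba_carrier A \<and> ba_J2 A x \<in> ba_carrier A) \<and>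
     ba_zero A \<in> ba_carrier A \<and> ba_one A \<in> ba_carrier A"

text \<open>A Bochvar algebra is a member of ISP(WK^e): it is (isomorphic to) a subalgebra of a
  direct power (WK^e)^X.  The index set X is taken in the type of maps from the carrier into
  the three-element set (which is large enough for every such embedding).\<close>

definition bochvar_alg :: "'a balg \<Rightarrow> bool" where
  "bochvar_alg A \<longleftrightarrow> balg_wf A \<and>
     (\<exists>(X :: ('a \<Rightarrow> wk) set) (e :: 'a \<Rightarrow> ('a \<Rightarrow> wk) \<Rightarrow> wk).
        (\<forall>x\<in>ba_carrier A. \<forall>y\<in>ba_carrier A. (\<forall>i\<in>X. e x i = e y i) \<longrightarrow> x = y) \<and>
        (\<forall>x\<in>ba_carrier A. \<forall>y\<in>ba_carrier A. \<forall>i\<in>X.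
            e (ba_meet A x y) i = wk_meet (e x i) (e y i) \<and>
            e (ba_join A x y) i = wk_join (e x i) (e y i)) \<and>
        (\<forall>x\<in>ba_carrier A. \<forall>i\<in>X.
            e (ba_neg A x) i = wk_neg (e x i) \<and> e (ba_J2 A x) i = wk_J2 (e x i)) \<and>
        (\<forall>i\<in>X. e (ba_zero A) i = WZero \<and> e (ba_one A) i = WOne))"

definition balg_hom :: "'a balg \<Rightarrow> 'c balg \<Rightarrow> ('a \<Rightarrow> 'c) \<Rightarrow> bool" where
  "balg_hom A C f \<longleftrightarrow>
     (\<forall>x\<in>ba_carrier A. f x \<in> ba_carrier C) \<and>
     (\<forall>x\<in>ba_carrier A. \<forall>y\<in>ba_carrier A.
        f (ba_meet A x y) = ba_meet C (f x) (f y) \<and> f (ba_join A x y) = ba_join C (f x) (f y)) \<and>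
     (\<forall>x\<in>ba_carrier A. f (ba_neg A x) = ba_neg C (f x) \<and> f (ba_J2 A x) = ba_J2 C (f x)) \<and>
     f (ba_zero A) = ba_zero C \<and> f (ba_one A) = ba_one C"

definition balg_iso :: "'a balg \<Rightarrow> 'c balg \<Rightarrow> ('a \<Rightarrow> 'c) \<Rightarrow> bool" where
  "balg_iso A C f \<longleftrightarrow> balg_hom A C f \<and>
     (\<exists>g. balg_hom C A g \<and> (\<forall>x\<in>ba_carrier A. g (f x) = x) \<and> (\<forall>y\<in>ba_carrier C. f (g y) = y))"

record 'b bsys =
  bs_carrier :: "'b set"
  bs_meet :: "'b \<Rightarrow> 'b \<Rightarrow> 'b"
  bs_join :: "'b \<Rightarrow> 'b \<Rightarrow> 'b"
  bs_neg :: "'b \<Rightarrow> 'b"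
  bs_zero :: "'b"
  bs_one :: "'b"
  bs_I :: "'b set"

definition boolean_alg :: "'b bsys \<Rightarrow> bool" where
  "boolean_alg S \<longleftrightarrow>
     (let C = bs_carrier S; m = bs_meet S; j = bs_join S; n = bs_neg S in
     (\<forall>x\<in>C. \<forall>y\<in>C. m x y \<in> C \<and> j x y \<in> C) \<and> (\<forall>x\<in>C. n x \<in> C) \<and>
     bs_zero S \<in> C \<and> bs_one S \<in> C \<and>
     (\<forall>x\<in>C. \<forall>y\<in>C. m x y = m y x \<and> j x y = j y x) \<and>
     (\<forall>x\<in>C. \<forall>y\<in>C. \<forall>z\<in>C. m x (m y z) = m (m x y) z \<and> j x (j y z) = j (j x y) z) \<and>
     (\<forall>x\<in>C. \<forall>y\<in>C. m x (j x y) = x \<and> j x (m x y) = x) \<and>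
     (\<forall>x\<in>C. \<forall>y\<in>C. \<forall>z\<in>C. m x (j y z) = j (m x y) (m x z)) \<and>
     (\<forall>x\<in>C. m x (n x) = bs_zero S \<and> j x (n x) = bs_one S))"

definition bochvar_sys :: "'b bsys \<Rightarrow> bool" where
  "bochvar_sys S \<longleftrightarrow> boolean_alg S \<and> bs_I S \<subseteq> bs_carrier S \<and> bs_one S \<in> bs_I S \<and>
     (\<forall>i\<in>bs_I S. \<forall>j\<in>bs_I S. bs_meet S i j \<in> bs_I S)"

definition bsys_hom :: "'b bsys \<Rightarrow> 'd bsys \<Rightarrow> ('b \<Rightarrow> 'd) \<Rightarrow> bool" where
  "bsys_hom S T g \<longleftrightarrow>
     (\<forall>x\<in>bs_carrier S. g x \<in> bs_carrier T) \<and>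
     (\<forall>x\<in>bs_carrier S. \<forall>y\<in>bs_carrier S.
        g (bs_meet S x y) = bs_meet T (g x) (g y) \<and> g (bs_join S x y) = bs_join T (g x) (g y)) \<and>
     (\<forall>x\<in>bs_carrier S. g (bs_neg S x) = bs_neg T (g x)) \<and>
     g (bs_zero S) = bs_zero T \<and> g (bs_one S) = bs_one T \<and>
     g ` bs_I S \<subseteq> bs_I T"

definition bsys_iso :: "'b bsys \<Rightarrow> 'd bsys \<Rightarrow> ('b \<Rightarrow> 'd) \<Rightarrow> bool" where
  "bsys_iso S T g \<longleftrightarrow> bsys_hom S T g \<and>
     (\<exists>h. bsys_hom T S h \<and> (\<forall>x\<in>bs_carrier S. h (g x) = x) \<and> (\<forall>y\<in>bs_carrier T. g (h y) = y))"

definition same_fibre :: "'a balg \<Rightarrow> 'a \<Rightarrow> 'a \<Rightarrow> bool" where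
  "same_fibre A a b \<longleftrightarrow>
     ba_meet A a (ba_join A a b) = a \<and> ba_meet A b (ba_join A b a) = b"

definition fibre :: "'a balg \<Rightarrow> 'a \<Rightarrow> 'a set" where
  "fibre A a = {b \<in> ba_carrier A. same_fibre A a b}"

definition bottom_fibre :: "'a balg \<Rightarrow> 'a set" where
  "bottom_fibre A = fibre A (ba_zero A)"

definition fibre_top :: "'a balg \<Rightarrow> 'a \<Rightarrow> 'a" where
  "fibre_top A a = (THE t. t \<in> fibre A a \<and> (\<forall>b\<in>fibre A a. ba_meet A b t = b))"

definition Gamma :: "'a balg \<Rightarrow> 'a bsys" where
  "Gamma A = \<lparr> bs_carrier = bottom_fibre A, bs_meet = ba_meet A, bs_join = ba_join A,
     bs_neg = ba_neg A, bs_zero = ba_zero A, bs_one = ba_one A,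
     bs_I = {ba_J2 A (fibre_top A a) | a. a \<in> ba_carrier A} \<rparr>"

definition Gamma_mor :: "'a balg \<Rightarrow> ('a \<Rightarrow> 'c) \<Rightarrow> 'a \<Rightarrow> 'c" where
  "Gamma_mor A f = (\<lambda>x. if x \<in> bottom_fibre A then f x else undefined)"

definition pfilter :: "'b bsys \<Rightarrow> 'b \<Rightarrow> 'b set" where
  "pfilter S i = {x \<in> bs_carrier S. bs_meet S i x = i}"

definition filter_cong :: "'b bsys \<Rightarrow> 'b set \<Rightarrow> ('b \<times> 'b) set" where
  "filter_cong S F = {(a, b). a \<in> bs_carrier S \<and> b \<in> bs_carrier S \<and>
                              (\<exists>f\<in>F. bs_meet S a f = bs_meet S b f)}"

definition cls :: "'b bsys \<Rightarrow> 'b \<Rightarrow> 'b \<Rightarrow> 'b set" where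
  "cls S i a = {b. (a, b) \<in> filter_cong S (pfilter S i)}"

definition rep :: "'b set \<Rightarrow> 'b" where
  "rep x = (SOME a. a \<in> x)"

text \<open>Elements of the Plonka sum are pairs (i, a/[i)) with i in I (tagging makes the
  fibres disjoint). The index join (dual order) is the Boolean meet; the transition map
  p_ij sends a/[i) to a/[j).\<close>
definition Xi :: "'b bsys \<Rightarrow> ('b \<times> 'b set) balg" where
  "Xi S = \<lparr> ba_carrier = {(i, cls S i a) | i a. i \<in> bs_I S \<and> a \<in> bs_carrier S},
     ba_meet = (\<lambda>(i, x) (j, y). let k = bs_meet S i j in
                  (k, cls S k (bs_meet S (rep (cls S k (rep x))) (rep (cls S k (rep y)))))),
     ba_join = (\<lambda>(i, x) (j, y). let k = bs_meet S i j in
                  (k, cls S k (bs_join S (rep (cls S k (rep x))) (rep (cls S k (rep y)))))),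
     ba_neg = (\<lambda>(i, x). (i, cls S i (bs_neg S (rep x)))),
     ba_J2 = (\<lambda>(i, x). (bs_one S, cls S (bs_one S)
                 (THE c. c \<in> bs_carrier S \<and> bs_meet S c i = c \<and>
                         (c, rep x) \<in> filter_cong S (pfilter S i)))),
     ba_zero = (bs_one S, cls S (bs_one S) (bs_zero S)),
     ba_one = (bs_one S, cls S (bs_one S) (bs_one S)) \<rparr>"

definition Xi_mor :: "'d bsys \<Rightarrow> ('b \<Rightarrow> 'd) \<Rightarrow> ('b \<times> 'b set) \<Rightarrow> ('d \<times> 'd set)" where
  "Xi_mor T g = (\<lambda>(i, x). (g i, cls T (g i) (g (rep x))))"

definition unit_square ::
  "('a \<Rightarrow> 'a \<times> 'a set) \<Rightarrow> ('c \<Rightarrow> 'c \<times> 'c set) \<Rightarrow> 'a balg \<Rightarrow> 'c balg \<Rightarrow> ('a \<Rightarrow> 'c) \<Rightarrow> bool" where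
  "unit_square etaA etaC A C f \<longleftrightarrow>
     (\<forall>x\<in>ba_carrier A. Xi_mor (Gamma C) (Gamma_mor A f) (etaA x) = etaC (f x))"

definition counit_square ::
  "('b \<times> 'b set \<Rightarrow> 'b) \<Rightarrow> ('d \<times> 'd set \<Rightarrow> 'd) \<Rightarrow> 'b bsys \<Rightarrow> 'd bsys \<Rightarrow> ('b \<Rightarrow> 'd) \<Rightarrow> bool" where
  "counit_square epsS epsT S T g \<longleftrightarrow>
     (\<forall>p\<in>bs_carrier (Gamma (Xi S)). g (epsS p) = epsT (Gamma_mor (Xi S) (Xi_mor T g) p))"

end

theory Submission
  imports Defs
begin


definition bhoms :: "'b bsys \<Rightarrow> ('b \<Rightarrow> bool) set" where
  "bhoms S = {h. (\<forall>x\<in>bs_carrier S. \<forall>y\<in>bs_carrier S.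
      h (bs_meet S x y) = (h x \<and> h y) \<and> h (bs_join S x y) = (h x \<or> h y)) \<and>
      (\<forall>x\<in>bs_carrier S. h (bs_neg S x) = (\<not> h x)) \<and>
      h (bs_zero S) = False \<and> h (bs_one S) = True}"

locale BA =
  fixes S :: "'b bsys"
  assumes ba: "boolean_alg S"
begin

abbreviation "C \<equiv> bs_carrier S"
abbreviation "m \<equiv> bs_meet S"
abbreviation "j \<equiv> bs_join S"
abbreviation "n \<equiv> bs_neg S"
abbreviation "z \<equiv> bs_zero S"
abbreviation "t \<equiv> bs_one S"

lemma cl_m[simp]: "x \<in> C \<Longrightarrow> y \<in> C \<Longrightarrow> m x y \<in> C"
  using ba unfolding boolean_alg_def Let_def by blast
lemma cl_j[simp]: "x \<in> C \<Longrightarrow> y \<in> C \<Longrightarrow> j x y \<in> C"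
  using ba unfolding boolean_alg_def Let_def by blast
lemma cl_n[simp]: "x \<in> C \<Longrightarrow> n x \<in> C"
  using ba unfolding boolean_alg_def Let_def by blast
lemma cl_z[simp]: "z \<in> C"
  using ba unfolding boolean_alg_def Let_def by blast
lemma cl_o[simp]: "t \<in> C"
  using ba unfolding boolean_alg_def Let_def by blast
lemma comm_m: "x \<in> C \<Longrightarrow> y \<in> C \<Longrightarrow> m x y = m y x"
  using ba unfolding boolean_alg_def Let_def by blast
lemma comm_j: "x \<in> C \<Longrightarrow> y \<in> C \<Longrightarrow> j x y = j y x"
  using ba unfolding boolean_alg_def Let_def by blast
lemma assoc_m: "x \<in> C \<Longrightarrow> y \<in> C \<Longrightarrow> w \<in> C \<Longrightarrow> m x (m y w) = m (m x y) w"
  using ba unfolding boolean_alg_def Let_def by blast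
lemma assoc_j: "x \<in> C \<Longrightarrow> y \<in> C \<Longrightarrow> w \<in> C \<Longrightarrow> j x (j y w) = j (j x y) w"
  using ba unfolding boolean_alg_def Let_def by blast
lemma abs1: "x \<in> C \<Longrightarrow> y \<in> C \<Longrightarrow> m x (j x y) = x"
  using ba unfolding boolean_alg_def Let_def by blast
lemma abs2: "x \<in> C \<Longrightarrow> y \<in> C \<Longrightarrow> j x (m x y) = x"
  using ba unfolding boolean_alg_def Let_def by blast
lemma dist: "x \<in> C \<Longrightarrow> y \<in> C \<Longrightarrow> w \<in> C \<Longrightarrow> m x (j y w) = j (m x y) (m x w)"
  using ba unfolding boolean_alg_def Let_def by blast
lemma compl1: "x \<in> C \<Longrightarrow> m x (n x) = z"
  using ba unfolding boolean_alg_def Let_def by blast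
lemma compl2: "x \<in> C \<Longrightarrow> j x (n x) = t"
  using ba unfolding boolean_alg_def Let_def by blast

lemma idem: "x \<in> C \<Longrightarrow> m x x = x"
  by (metis abs1 abs2 cl_m)

lemma m_one: "x \<in> C \<Longrightarrow> m x t = x"
  by (metis abs1 cl_n compl2)

lemma m_zero: "x \<in> C \<Longrightarrow> m x z = z"
  by (metis assoc_m cl_n compl1 idem)

lemma j_zero: "x \<in> C \<Longrightarrow> j x z = x"
  by (metis abs2 cl_n compl1)

lemma zero_j: "x \<in> C \<Longrightarrow> j z x = x"
  by (metis comm_j cl_z j_zero)

lemma split_eq: assumes "a \<in> C" "b \<in> C" "m a (n b) = z" "m b (n a) = z" shows "a = b"
proof -
  have "a = m a b" using assms
    by (metis cl_m cl_n compl2 dist j_zero m_one)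
  moreover have "b = m b a" using assms
    by (metis cl_m cl_n compl2 dist j_zero m_one)
  ultimately show ?thesis using assms comm_m by metis
qed

definition filt :: "'b \<Rightarrow> 'b set set" where
  "filt c = {F. F \<subseteq> C \<and> c \<in> F \<and> z \<notin> F \<and> (\<forall>x\<in>F. \<forall>y\<in>F. m x y \<in> F) \<and>
              (\<forall>x\<in>F. \<forall>y\<in>C. m x y = x \<longrightarrow> y \<in> F)}"

lemma principal_filt: assumes "c \<in> C" "c \<noteq> z" shows "{y\<in>C. m c y = c} \<in> filt c"
  unfolding filt_def using assms
  apply (auto simp: idem m_zero)
   apply (metis assoc_m)
  by (metis assoc_m)

lemma filt_max: assumes "c \<in> C" "c \<noteq> z"
  shows "\<exists>M\<in>filt c. \<forall>X\<in>filt c. M \<subseteq> X \<longrightarrow> X = M"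
proof (rule Zorn_Lemma2, intro ballI)
  fix Ch assume ch: "Ch \<in> chains (filt c)"
  show "\<exists>U\<in>filt c. \<forall>X\<in>Ch. X \<subseteq> U"
  proof (cases "Ch = {}")
    case True then show ?thesis using principal_filt[OF assms] by auto
  next
    case False
    have sub: "Ch \<subseteq> filt c" and tot: "\<forall>X\<in>Ch. \<forall>Y\<in>Ch. X \<subseteq> Y \<or> Y \<subseteq> X"
      using ch unfolding chains_def chain_subset_def by auto
    have "\<Union>Ch \<in> filt c"
    proof -
      have "\<forall>x\<in>\<Union>Ch. \<forall>y\<in>\<Union>Ch. m x y \<in> \<Union>Ch"
      proof (intro ballI)
        fix x y assume "x \<in> \<Union>Ch" "y \<in> \<Union>Ch"
        then obtain X Y where XY: "X \<in> Ch" "Y \<in> Ch" "x \<in> X" "y \<in> Y" by auto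
        show "m x y \<in> \<Union>Ch"
        proof (cases "X \<subseteq> Y")
          case True then show ?thesis using XY sub unfolding filt_def by blast
        next
          case False then have "Y \<subseteq> X" using tot XY by blast
          then show ?thesis using XY sub unfolding filt_def by blast
        qed
      qed
      then show ?thesis using sub False unfolding filt_def by blast
    qed
    then show ?thesis by blast
  qed
qed

lemma ultra: assumes "c \<in> C" "c \<noteq> z"
  shows "\<exists>h\<in>bhoms S. h c"
proof -
  obtain M where M: "M \<in> filt c" and mx: "\<And>X. X \<in> filt c \<Longrightarrow> M \<subseteq> X \<Longrightarrow> X = M"
    using filt_max[OF assms] by blast
  have MC: "M \<subseteq> C" and cM: "c \<in> M" and zM: "z \<notin> M"
    and Mm: "\<And>x y. x \<in> M \<Longrightarrow> y \<in> M \<Longrightarrow> m x y \<in> M"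
    and Mu: "\<And>x y. x \<in> M \<Longrightarrow> y \<in> C \<Longrightarrow> m x y = x \<Longrightarrow> y \<in> M"
    using M unfolding filt_def by auto
  have prime: "n x \<in> M" if x: "x \<in> C" "x \<notin> M" for x
  proof -
    define M' where "M' = {y\<in>C. \<exists>u\<in>M. m (m u x) y = m u x}"
    have "z \<in> M'"
    proof (rule ccontr)
      assume zM': "z \<notin> M'"
      have "M' \<in> filt c"
        unfolding filt_def
      proof (intro CollectI conjI ballI impI)
        show "M' \<subseteq> C" unfolding M'_def by auto
        show "c \<in> M'" unfolding M'_def using cM MC x assms
          by (auto intro!: bexI[of _ c]) (metis assoc_m comm_m idem)
        show "z \<notin> M'" by fact
      next
        fix a b assume "a \<in> M'" "b \<in> M'"
        then obtain u1 u2 where u: "u1 \<in> M" "u2 \<in> M" "a \<in> C" "b \<in> C"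
          "m (m u1 x) a = m u1 x" "m (m u2 x) b = m u2 x" unfolding M'_def by auto
        have u12: "u1 \<in> C" "u2 \<in> C" using u MC by auto
        have "m (m (m u1 u2) x) (m a b) = m (m u1 u2) x"
        proof -
          have "m (m (m u1 u2) x) (m a b) = m u2 (m (m (m u1 x) a) b)"
            using u u12 x by (metis assoc_m comm_m cl_m)
          also have "\<dots> = m u2 (m (m u1 x) b)" using u by simp
          also have "\<dots> = m u1 (m (m u2 x) b)" using u u12 x by (metis assoc_m comm_m cl_m)
          also have "\<dots> = m u1 (m u2 x)" using u by simp
          also have "\<dots> = m (m u1 u2) x" using u12 x by (metis assoc_m)
          finally show ?thesis .
        qed
        then show "m a b \<in> M'" unfolding M'_def using u u12 Mm by auto
      next
        fix a b assume "a \<in> M'" "b \<in> C" "m a b = a"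
        then obtain u where u: "u \<in> M" "a \<in> C" "m (m u x) a = m u x" unfolding M'_def by auto
        have "m (m u x) b = m u x" using u MC x \<open>b \<in> C\<close> \<open>m a b = a\<close>
          by (metis assoc_m cl_m subsetD)
        then show "b \<in> M'" unfolding M'_def using u \<open>b \<in> C\<close> by auto
      qed
      moreover have "M \<subseteq> M'"
      proof
        fix y assume "y \<in> M"
        then have "y \<in> C" using MC by auto
        then have "m (m y x) y = m y x" using x by (metis assoc_m comm_m idem)
        then show "y \<in> M'" unfolding M'_def using \<open>y \<in> M\<close> \<open>y \<in> C\<close> by auto
      qed
      ultimately have "M' = M" using mx by blast
      moreover have "x \<in> M'" unfolding M'_def using cM MC x assms
        by (auto intro!: bexI[of _ c]) (metis assoc_m idem)
      ultimately show False using x by auto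
    qed
    then obtain u where u: "u \<in> M" "m (m u x) z = m u x" unfolding M'_def by auto
    have uC: "u \<in> C" using u MC by auto
    then have ux: "m u x = z" using u x by (metis cl_m m_zero)
    have "m u (n x) = u" using uC x ux
      by (metis cl_m cl_n compl2 dist m_one zero_j)
    then show ?thesis using Mu u x by auto
  qed
  have notboth: "\<not> (x \<in> M \<and> n x \<in> M)" if "x \<in> C" for x
    using Mm compl1 that zM by metis
  define h where "h = (\<lambda>x. x \<in> M)"
  have "h \<in> bhoms S"
    unfolding bhoms_def h_def
  proof (intro CollectI conjI ballI)
    fix x y assume xy: "x \<in> C" "y \<in> C"
    show "(m x y \<in> M) = (x \<in> M \<and> y \<in> M)"
    proof
      assume "m x y \<in> M"
      moreover have "m (m x y) x = m x y" "m (m x y) y = m x y" using xy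
        by (metis assoc_m comm_m idem)+
      ultimately show "x \<in> M \<and> y \<in> M" using Mu xy by auto
    qed (use Mm in auto)
    show "(j x y \<in> M) = (x \<in> M \<or> y \<in> M)"
    proof
      assume jM: "j x y \<in> M"
      show "x \<in> M \<or> y \<in> M"
      proof (rule ccontr)
        assume "\<not> (x \<in> M \<or> y \<in> M)"
        then have "m (n x) (n y) \<in> M" using prime xy Mm by auto
        then have "m (j x y) (m (n x) (n y)) \<in> M" using Mm jM by auto
        moreover have "m (j x y) (m (n x) (n y)) = z"
        proof -
          have "m (j x y) (m (n x) (n y)) = j (m (m (n x) (n y)) x) (m (m (n x) (n y)) y)"
            using xy by (metis cl_m cl_n cl_j comm_m dist)
          also have "m (m (n x) (n y)) x = z" using xy
            by (metis assoc_m cl_n comm_m compl1 m_zero)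
          also have "m (m (n x) (n y)) y = z" using xy
            by (metis assoc_m cl_n comm_m compl1 m_zero)
          finally show ?thesis by (simp add: j_zero)
        qed
        ultimately show False using zM by auto
      qed
    next
      assume "x \<in> M \<or> y \<in> M"
      then show "j x y \<in> M" using xy Mu abs1 comm_j cl_j by metis
    qed
  next
    fix x assume x: "x \<in> C"
    show "(n x \<in> M) = (x \<notin> M)" using prime notboth x by blast
  next
    show "(z \<in> M) = False" using zM by auto
    show "(t \<in> M) = True" using Mu cM MC assms m_one by auto
  qed
  then show ?thesis using cM h_def by auto
qed

lemma sep: assumes "a \<in> C" "b \<in> C" "\<And>h. h \<in> bhoms S \<Longrightarrow> h a = h b" shows "a = b"
proof (rule ccontr)
  assume ne: "a \<noteq> b"
  show False
  proof (cases "m a (n b) = z")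
    case True
    then have "m b (n a) \<noteq> z" using split_eq assms ne by auto
    then obtain h where "h \<in> bhoms S" "h (m b (n a))" using ultra[of "m b (n a)"] assms by auto
    then show False using assms(3)[of h] assms unfolding bhoms_def by auto
  next
    case False
    then obtain h where "h \<in> bhoms S" "h (m a (n b))" using ultra[of "m a (n b)"] assms by auto
    then show False using assms(3)[of h] assms unfolding bhoms_def by auto
  qed
qed

end



lemma bhomsD:
  assumes "h \<in> bhoms S"
  shows "\<And>x y. x \<in> bs_carrier S \<Longrightarrow> y \<in> bs_carrier S \<Longrightarrow> h (bs_meet S x y) = (h x \<and> h y)"
    and "\<And>x y. x \<in> bs_carrier S \<Longrightarrow> y \<in> bs_carrier S \<Longrightarrow> h (bs_join S x y) = (h x \<or> h y)"
    and "\<And>x. x \<in> bs_carrier S \<Longrightarrow> h (bs_neg S x) = (\<not> h x)"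
    and "h (bs_zero S) = False" and "h (bs_one S) = True"
  using assms unfolding bhoms_def by auto

lemma bhoms_comp:
  assumes "bsys_hom S T g" "h \<in> bhoms T"
  shows "h \<circ> g \<in> bhoms S"
  using assms unfolding bsys_hom_def bhoms_def by auto

context BA
begin

lemma bh_m: "h \<in> bhoms S \<Longrightarrow> x \<in> C \<Longrightarrow> y \<in> C \<Longrightarrow> h (m x y) = (h x \<and> h y)"
  and bh_j: "h \<in> bhoms S \<Longrightarrow> x \<in> C \<Longrightarrow> y \<in> C \<Longrightarrow> h (j x y) = (h x \<or> h y)"
  and bh_n: "h \<in> bhoms S \<Longrightarrow> x \<in> C \<Longrightarrow> h (n x) = (\<not> h x)"
  and bh_z: "h \<in> bhoms S \<Longrightarrow> h z = False"
  and bh_t: "h \<in> bhoms S \<Longrightarrow> h t = True"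
  unfolding bhoms_def by auto

lemmas bh = bh_m bh_j bh_n bh_z bh_t

lemma mem_cls:
  assumes "i \<in> C" "a \<in> C"
  shows "b \<in> cls S i a \<longleftrightarrow> b \<in> C \<and> (\<forall>h\<in>bhoms S. h i \<longrightarrow> h a = h b)"
proof
  assume "b \<in> cls S i a"
  then obtain f where f: "b \<in> C" "f \<in> C" "m i f = i" "m a f = m b f"
    unfolding cls_def filter_cong_def pfilter_def by auto
  have "h a = h b" if "h \<in> bhoms S" "h i" for h
  proof -
    have "h f" using f that bh_m[OF that(1), of i f] assms by auto
    then show ?thesis using f that bh_m[OF that(1), of a f] bh_m[OF that(1), of b f] assms
      by auto
  qed
  then show "b \<in> C \<and> (\<forall>h\<in>bhoms S. h i \<longrightarrow> h a = h b)" using f by auto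
next
  assume b: "b \<in> C \<and> (\<forall>h\<in>bhoms S. h i \<longrightarrow> h a = h b)"
  have "m a i = m b i"
    by (rule sep) (use b assms in \<open>auto simp: bh\<close>)
  moreover have "i \<in> pfilter S i" unfolding pfilter_def using assms idem by auto
  ultimately show "b \<in> cls S i a"
    unfolding cls_def filter_cong_def using assms b by auto
qed

lemma self_cls: "i \<in> C \<Longrightarrow> a \<in> C \<Longrightarrow> a \<in> cls S i a"
  by (simp add: mem_cls)

lemma rep_cls:
  assumes "i \<in> C" "a \<in> C"
  shows "rep (cls S i a) \<in> C" and "\<And>h. h \<in> bhoms S \<Longrightarrow> h i \<Longrightarrow> h (rep (cls S i a)) = h a"
proof -
  have "rep (cls S i a) \<in> cls S i a"
    unfolding rep_def by (rule someI) (rule self_cls[OF assms])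
  then show "rep (cls S i a) \<in> C" and "\<And>h. h \<in> bhoms S \<Longrightarrow> h i \<Longrightarrow> h (rep (cls S i a)) = h a"
    using mem_cls[OF assms] by auto
qed

lemma cls_eq_iff:
  assumes "i \<in> C" "a \<in> C" "b \<in> C"
  shows "cls S i a = cls S i b \<longleftrightarrow> (\<forall>h\<in>bhoms S. h i \<longrightarrow> h a = h b)"
proof
  assume "cls S i a = cls S i b"
  then have "b \<in> cls S i a" using self_cls assms by auto
  then show "\<forall>h\<in>bhoms S. h i \<longrightarrow> h a = h b" using mem_cls assms by auto
next
  assume H: "\<forall>h\<in>bhoms S. h i \<longrightarrow> h a = h b"
  show "cls S i a = cls S i b"
  proof (rule set_eqI)
    fix x show "x \<in> cls S i a \<longleftrightarrow> x \<in> cls S i b"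
      unfolding mem_cls[OF assms(1,2)] mem_cls[OF assms(1,3)] using H by blast
  qed
qed

lemma cls_eqI:
  assumes "i \<in> C" "a \<in> C" "b \<in> C" "\<And>h. h \<in> bhoms S \<Longrightarrow> h i \<Longrightarrow> h a = h b"
  shows "cls S i a = cls S i b"
  using cls_eq_iff assms by auto

lemma cls_eq_meet:
  assumes "i \<in> C" "a \<in> C" "b \<in> C"
  shows "cls S i a = cls S i b \<longleftrightarrow> m a i = m b i"
proof
  assume "cls S i a = cls S i b"
  then have H: "\<forall>h\<in>bhoms S. h i \<longrightarrow> h a = h b" using cls_eq_iff assms by auto
  show "m a i = m b i" by (rule sep) (use H assms in \<open>auto simp: bh\<close>)
next
  assume E: "m a i = m b i"
  show "cls S i a = cls S i b"
  proof (rule cls_eqI[OF assms])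
    fix h assume "h \<in> bhoms S" "h i"
    then show "h a = h b" using E bh_m[of h a i] bh_m[of h b i] assms by auto
  qed
qed

lemma the_J2:
  assumes "i \<in> C" "a \<in> C"
  shows "(THE c. c \<in> C \<and> m c i = c \<and> (c, a) \<in> filter_cong S (pfilter S i)) = m a i"
proof (rule the_equality)
  have fc: "(c, a) \<in> filter_cong S (pfilter S i) \<longleftrightarrow> c \<in> C \<and> (\<forall>h\<in>bhoms S. h i \<longrightarrow> h c = h a)"
    if "c \<in> C" for c
    using mem_cls[OF assms(1) that, of a] assms that by (simp add: cls_def)
  show "m a i \<in> C \<and> m (m a i) i = m a i \<and> (m a i, a) \<in> filter_cong S (pfilter S i)"
    using assms fc[of "m a i"] by (auto simp: bh) (metis assoc_m idem)
  fix c assume c: "c \<in> C \<and> m c i = c \<and> (c, a) \<in> filter_cong S (pfilter S i)"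
  then have H: "\<forall>h\<in>bhoms S. h i \<longrightarrow> h c = h a" using fc by auto
  show "c = m a i"
  proof (rule sep)
    fix h assume h: "h \<in> bhoms S"
    have "h c = h (m c i)" using c by simp
    also have "\<dots> = (h c \<and> h i)" using h c assms bh_m[of h c i] by blast
    finally have "h c = (h c \<and> h i)" .
    then show "h c = h (m a i)" using H h assms c by (auto simp: bh_m)
  qed (use c assms in auto)
qed

lemma cls_one:
  assumes "a \<in> C" shows "cls S t a = {a}"
proof -
  have "b \<in> cls S t a \<longleftrightarrow> b = a" for b
  proof
    assume "b \<in> cls S t a"
    then have "b \<in> C" "\<forall>h\<in>bhoms S. h a = h b" using mem_cls[of t a b] assms by (auto simp: bh)
    then show "b = a" using sep[of b a] assms by auto
  qed (use self_cls assms in auto)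
  then show ?thesis by auto
qed

lemma rep_single: "rep {a} = a" unfolding rep_def by auto

end




definition phi :: "('b \<Rightarrow> bool) \<Rightarrow> 'b \<times> 'b set \<Rightarrow> wk" where
  "phi h p = (if h (fst p) then (if h (rep (snd p)) then WOne else WZero) else WHalf)"

lemma bsys_BA: "bochvar_sys S \<Longrightarrow> BA S"
  unfolding bochvar_sys_def BA_def by auto

lemma bsys_I: "bochvar_sys S \<Longrightarrow> bs_I S \<subseteq> bs_carrier S"
  and bsys_tI: "bochvar_sys S \<Longrightarrow> bs_one S \<in> bs_I S"
  and bsys_mI: "bochvar_sys S \<Longrightarrow> i \<in> bs_I S \<Longrightarrow> k \<in> bs_I S \<Longrightarrow> bs_meet S i k \<in> bs_I S"
  unfolding bochvar_sys_def by auto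

lemma Xi_car: "ba_carrier (Xi S) = {(i, cls S i a) | i a. i \<in> bs_I S \<and> a \<in> bs_carrier S}"
  by (simp add: Xi_def)

context BA
begin

lemma Xi_meet_nf:
  assumes "i \<in> C" "k \<in> C" "a \<in> C" "b \<in> C"
  shows "ba_meet (Xi S) (i, cls S i a) (k, cls S k b) = (m i k, cls S (m i k) (m a b))"
proof -
  let ?r1 = "rep (cls S i a)" and ?r2 = "rep (cls S k b)"
  have r: "?r1 \<in> C" "?r2 \<in> C" using rep_cls assms by auto
  have "cls S (m i k) (m (rep (cls S (m i k) ?r1)) (rep (cls S (m i k) ?r2))) = cls S (m i k) (m a b)"
  proof (rule cls_eqI)
    fix h assume h: "h \<in> bhoms S" "h (m i k)"
    then have hik: "h i" "h k" using assms bh_m by auto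
    have mik: "m i k \<in> C" using assms by simp
    have "h (rep (cls S (m i k) ?r1)) = h a"
      using rep_cls(2)[OF mik r(1) h] rep_cls(2)[OF assms(1,3) h(1) hik(1)] by simp
    moreover have "h (rep (cls S (m i k) ?r2)) = h b"
      using rep_cls(2)[OF mik r(2) h] rep_cls(2)[OF assms(2,4) h(1) hik(2)] by simp
    ultimately show "h (m (rep (cls S (m i k) ?r1)) (rep (cls S (m i k) ?r2))) = h (m a b)"
      using h r assms rep_cls(1)[OF mik r(1)] rep_cls(1)[OF mik r(2)] by (simp add: bh)
  qed (use assms r rep_cls in auto)
  then show ?thesis by (simp add: Xi_def Let_def)
qed

lemma Xi_join_nf:
  assumes "i \<in> C" "k \<in> C" "a \<in> C" "b \<in> C"
  shows "ba_join (Xi S) (i, cls S i a) (k, cls S k b) = (m i k, cls S (m i k) (j a b))"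
proof -
  let ?r1 = "rep (cls S i a)" and ?r2 = "rep (cls S k b)"
  have r: "?r1 \<in> C" "?r2 \<in> C" using rep_cls assms by auto
  have "cls S (m i k) (j (rep (cls S (m i k) ?r1)) (rep (cls S (m i k) ?r2))) = cls S (m i k) (j a b)"
  proof (rule cls_eqI)
    fix h assume h: "h \<in> bhoms S" "h (m i k)"
    then have hik: "h i" "h k" using assms bh_m by auto
    have mik: "m i k \<in> C" using assms by simp
    have "h (rep (cls S (m i k) ?r1)) = h a"
      using rep_cls(2)[OF mik r(1) h] rep_cls(2)[OF assms(1,3) h(1) hik(1)] by simp
    moreover have "h (rep (cls S (m i k) ?r2)) = h b"
      using rep_cls(2)[OF mik r(2) h] rep_cls(2)[OF assms(2,4) h(1) hik(2)] by simp
    ultimately show "h (j (rep (cls S (m i k) ?r1)) (rep (cls S (m i k) ?r2))) = h (j a b)"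
      using h r assms rep_cls(1)[OF mik r(1)] rep_cls(1)[OF mik r(2)] by (simp add: bh)
  qed (use assms r rep_cls in auto)
  then show ?thesis by (simp add: Xi_def Let_def)
qed

lemma Xi_neg_nf:
  assumes "i \<in> C" "a \<in> C"
  shows "ba_neg (Xi S) (i, cls S i a) = (i, cls S i (n a))"
proof -
  have "cls S i (n (rep (cls S i a))) = cls S i (n a)"
    by (rule cls_eqI) (use assms rep_cls[of i a] in \<open>auto simp: bh\<close>)
  then show ?thesis by (simp add: Xi_def)
qed

lemma Xi_J2_nf:
  assumes "i \<in> C" "a \<in> C"
  shows "ba_J2 (Xi S) (i, cls S i a) = (t, cls S t (m a i))"
proof -
  let ?r = "rep (cls S i a)"
  have r: "?r \<in> C" using rep_cls assms by auto
  have "cls S t (THE c. c \<in> C \<and> m c i = c \<and> (c, ?r) \<in> filter_cong S (pfilter S i)) = cls S t (m a i)"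
    unfolding the_J2[OF assms(1) r]
    by (rule cls_eqI) (use assms r rep_cls[of i a] in \<open>auto simp: bh\<close>)
  then show ?thesis by (simp add: Xi_def)
qed

lemma Xi_zero: "ba_zero (Xi S) = (t, cls S t z)"
  and Xi_one: "ba_one (Xi S) = (t, cls S t t)"
  by (simp_all add: Xi_def)

lemma phi_nf:
  assumes "i \<in> C" "a \<in> C" "h \<in> bhoms S"
  shows "phi h (i, cls S i a) = (if h i then (if h a then WOne else WZero) else WHalf)"
  using assms rep_cls[of i a] unfolding phi_def by auto

end

lemma Xi_mor_nf:
  assumes S: "boolean_alg S" and T: "boolean_alg T" and g: "bsys_hom S T g"
    and ia: "i \<in> bs_carrier S" "a \<in> bs_carrier S"
  shows "Xi_mor T g (i, cls S i a) = (g i, cls T (g i) (g a))"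
proof -
  interpret s: BA S by (rule BA.intro[OF S])
  interpret t: BA T by (rule BA.intro[OF T])
  have gC: "\<And>x. x \<in> bs_carrier S \<Longrightarrow> g x \<in> bs_carrier T" using g unfolding bsys_hom_def by auto
  have "cls T (g i) (g (rep (cls S i a))) = cls T (g i) (g a)"
  proof (rule t.cls_eqI)
    fix h assume h: "h \<in> bhoms T" "h (g i)"
    have "h \<circ> g \<in> bhoms S" by (rule bhoms_comp[OF g h(1)])
    then show "h (g (rep (cls S i a))) = h (g a)"
      using s.rep_cls(2)[OF ia, of "h \<circ> g"] h by simp
  qed (use gC ia s.rep_cls in auto)
  then show ?thesis by (simp add: Xi_mor_def)
qed




lemma Xi_carE:
  assumes "p \<in> ba_carrier (Xi S)"
  obtains i a where "p = (i, cls S i a)" "i \<in> bs_I S" "a \<in> bs_carrier S"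
  using assms by (auto simp: Xi_car)

lemma Xi_carI:
  "i \<in> bs_I S \<Longrightarrow> a \<in> bs_carrier S \<Longrightarrow> (i, cls S i a) \<in> ba_carrier (Xi S)"
  by (auto simp: Xi_car)

lemma Xi_wf:
  assumes bs: "bochvar_sys S"
  shows "balg_wf (Xi S)"
proof -
  interpret BA S by (rule bsys_BA[OF bs])
  have IC: "bs_I S \<subseteq> C" by (rule bsys_I[OF bs])
  note I = bsys_tI[OF bs] bsys_mI[OF bs]
  show ?thesis unfolding balg_wf_def
  proof (intro conjI ballI)
    fix p q assume p: "p \<in> ba_carrier (Xi S)" and q: "q \<in> ba_carrier (Xi S)"
    obtain i a where pa: "p = (i, cls S i a)" "i \<in> bs_I S" "a \<in> C" using Xi_carE[OF p] by blast
    obtain k b where qb: "q = (k, cls S k b)" "k \<in> bs_I S" "b \<in> C" using Xi_carE[OF q] by blast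
    have ik: "i \<in> C" "k \<in> C" using pa qb IC by auto
    show "ba_meet (Xi S) p q \<in> ba_carrier (Xi S)" "ba_join (Xi S) p q \<in> ba_carrier (Xi S)"
      using pa qb ik I by (auto simp: Xi_meet_nf Xi_join_nf intro!: Xi_carI)
  next
    fix p assume p: "p \<in> ba_carrier (Xi S)"
    obtain i a where pa: "p = (i, cls S i a)" "i \<in> bs_I S" "a \<in> C" using Xi_carE[OF p] by blast
    have ik: "i \<in> C" using pa IC by auto
    show "ba_neg (Xi S) p \<in> ba_carrier (Xi S)" "ba_J2 (Xi S) p \<in> ba_carrier (Xi S)"
      using pa ik I by (auto simp: Xi_neg_nf Xi_J2_nf intro!: Xi_carI)
  next
    show "ba_zero (Xi S) \<in> ba_carrier (Xi S)" "ba_one (Xi S) \<in> ba_carrier (Xi S)"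
      using I by (auto simp: Xi_zero Xi_one intro!: Xi_carI)
  qed
qed

lemma Xi_emb:
  assumes bs: "bochvar_sys S"
  shows "(\<forall>p\<in>ba_carrier (Xi S). \<forall>q\<in>ba_carrier (Xi S). (\<forall>h\<in>bhoms S. phi h p = phi h q) \<longrightarrow> p = q) \<and>
    (\<forall>p\<in>ba_carrier (Xi S). \<forall>q\<in>ba_carrier (Xi S). \<forall>h\<in>bhoms S.
       phi h (ba_meet (Xi S) p q) = wk_meet (phi h p) (phi h q) \<and>
       phi h (ba_join (Xi S) p q) = wk_join (phi h p) (phi h q)) \<and>
    (\<forall>p\<in>ba_carrier (Xi S). \<forall>h\<in>bhoms S.
       phi h (ba_neg (Xi S) p) = wk_neg (phi h p) \<and> phi h (ba_J2 (Xi S) p) = wk_J2 (phi h p)) \<and>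
    (\<forall>h\<in>bhoms S. phi h (ba_zero (Xi S)) = WZero \<and> phi h (ba_one (Xi S)) = WOne)"
proof -
  interpret BA S by (rule bsys_BA[OF bs])
  have IC: "bs_I S \<subseteq> C" by (rule bsys_I[OF bs])
  show ?thesis
  proof (intro conjI ballI impI)
    fix p q assume p: "p \<in> ba_carrier (Xi S)" and q: "q \<in> ba_carrier (Xi S)"
      and H: "\<forall>h\<in>bhoms S. phi h p = phi h q"
    obtain i a where pa: "p = (i, cls S i a)" "i \<in> bs_I S" "a \<in> C" using Xi_carE[OF p] by blast
    obtain k b where qb: "q = (k, cls S k b)" "k \<in> bs_I S" "b \<in> C" using Xi_carE[OF q] by blast
    have ik: "i \<in> C" "k \<in> C" using pa qb IC by auto
    have H': "(if h i then (if h a then WOne else WZero) else WHalf) =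
                    (if h k then (if h b then WOne else WZero) else WHalf)" if h: "h \<in> bhoms S" for h
    proof -
      have "phi h p = phi h q" using H h by auto
      then show ?thesis using pa qb phi_nf[OF ik(1) pa(3) h] phi_nf[OF ik(2) qb(3) h] by simp
    qed
    have "i = k"
    proof (rule sep)
      fix h assume "h \<in> bhoms S"
      from H'[OF this] show "h i = h k" by (auto split: if_splits)
    qed (use ik in auto)
    moreover have "cls S i a = cls S i b"
    proof (rule cls_eqI)
      fix h assume "h \<in> bhoms S" "h i"
      with H'[OF this(1)] show "h a = h b" using \<open>i = k\<close> by (auto split: if_splits)
    qed (use ik pa qb in auto)
    ultimately show "p = q" using pa qb by simp
  next
    fix p q h assume p: "p \<in> ba_carrier (Xi S)" and q: "q \<in> ba_carrier (Xi S)" and h: "h \<in> bhoms S"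
    obtain i a where pa: "p = (i, cls S i a)" "i \<in> bs_I S" "a \<in> C" using Xi_carE[OF p] by blast
    obtain k b where qb: "q = (k, cls S k b)" "k \<in> bs_I S" "b \<in> C" using Xi_carE[OF q] by blast
    have ik: "i \<in> C" "k \<in> C" using pa qb IC by auto
    show "phi h (ba_meet (Xi S) p q) = wk_meet (phi h p) (phi h q)"
      using pa qb ik h by (simp add: Xi_meet_nf phi_nf bh wk_meet_def)
    show "phi h (ba_join (Xi S) p q) = wk_join (phi h p) (phi h q)"
      using pa qb ik h by (simp add: Xi_join_nf phi_nf bh wk_join_def)
  next
    fix p h assume p: "p \<in> ba_carrier (Xi S)" and h: "h \<in> bhoms S"
    obtain i a where pa: "p = (i, cls S i a)" "i \<in> bs_I S" "a \<in> C" using Xi_carE[OF p] by blast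
    have ik: "i \<in> C" using pa IC by auto
    show "phi h (ba_neg (Xi S) p) = wk_neg (phi h p)"
      using pa ik h by (simp add: Xi_neg_nf phi_nf bh)
    show "phi h (ba_J2 (Xi S) p) = wk_J2 (phi h p)"
      using pa ik h by (simp add: Xi_J2_nf phi_nf bh wk_J2_def)
  next
    fix h assume h: "h \<in> bhoms S"
    show "phi h (ba_zero (Xi S)) = WZero" "phi h (ba_one (Xi S)) = WOne"
      using h by (simp_all add: Xi_zero Xi_one phi_nf bh)
  qed
qed

lemma Xi_bochvar:
  fixes S :: "'b bsys"
  assumes bs: "bochvar_sys S"
  shows "bochvar_alg (Xi S)"
  unfolding bochvar_alg_def
  apply (rule conjI[OF Xi_wf[OF bs]])
  apply (rule exI[of _ "phi ` bhoms S"], rule exI[of _ "\<lambda>p f. f p"])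
  using Xi_emb[OF bs] by auto

lemma Xi_mor_hom:
  assumes S: "bochvar_sys S" and T: "bochvar_sys T" and g: "bsys_hom S T g"
  shows "balg_hom (Xi S) (Xi T) (Xi_mor T g)"
proof -
  interpret s: BA S by (rule bsys_BA[OF S])
  interpret t: BA T by (rule bsys_BA[OF T])
  have SB: "boolean_alg S" "boolean_alg T" using S T unfolding bochvar_sys_def by auto
  have IC: "bs_I S \<subseteq> bs_carrier S" by (rule bsys_I[OF S])
  have gC: "\<And>x. x \<in> bs_carrier S \<Longrightarrow> g x \<in> bs_carrier T"
    and gm: "\<And>x y. x \<in> bs_carrier S \<Longrightarrow> y \<in> bs_carrier S \<Longrightarrow> g (bs_meet S x y) = bs_meet T (g x) (g y)"
    and gj: "\<And>x y. x \<in> bs_carrier S \<Longrightarrow> y \<in> bs_carrier S \<Longrightarrow> g (bs_join S x y) = bs_join T (g x) (g y)"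
    and gn: "\<And>x. x \<in> bs_carrier S \<Longrightarrow> g (bs_neg S x) = bs_neg T (g x)"
    and gz: "g (bs_zero S) = bs_zero T" and go: "g (bs_one S) = bs_one T"
    and gI: "\<And>x. x \<in> bs_I S \<Longrightarrow> g x \<in> bs_I T"
    using g unfolding bsys_hom_def by auto
  note nf = Xi_mor_nf[OF SB g]
  show ?thesis unfolding balg_hom_def
  proof (intro conjI ballI)
    fix p assume p: "p \<in> ba_carrier (Xi S)"
    obtain i a where pa: "p = (i, cls S i a)" "i \<in> bs_I S" "a \<in> bs_carrier S" using Xi_carE[OF p] by blast
    have ik: "i \<in> bs_carrier S" using pa IC by auto
    show "Xi_mor T g p \<in> ba_carrier (Xi T)" using pa ik nf gI gC Xi_carI by metis
    show "Xi_mor T g (ba_neg (Xi S) p) = ba_neg (Xi T) (Xi_mor T g p)"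
      using pa ik gC by (simp add: s.Xi_neg_nf t.Xi_neg_nf nf gn)
    show "Xi_mor T g (ba_J2 (Xi S) p) = ba_J2 (Xi T) (Xi_mor T g p)"
      using pa ik gC by (simp add: s.Xi_J2_nf t.Xi_J2_nf nf gm go)
  next
    fix p q assume p: "p \<in> ba_carrier (Xi S)" and q: "q \<in> ba_carrier (Xi S)"
    obtain i a where pa: "p = (i, cls S i a)" "i \<in> bs_I S" "a \<in> bs_carrier S" using Xi_carE[OF p] by blast
    obtain k b where qb: "q = (k, cls S k b)" "k \<in> bs_I S" "b \<in> bs_carrier S" using Xi_carE[OF q] by blast
    have ik: "i \<in> bs_carrier S" "k \<in> bs_carrier S" using pa qb IC by auto
    show "Xi_mor T g (ba_meet (Xi S) p q) = ba_meet (Xi T) (Xi_mor T g p) (Xi_mor T g q)"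
      using pa qb ik gC by (simp add: s.Xi_meet_nf t.Xi_meet_nf nf gm)
    show "Xi_mor T g (ba_join (Xi S) p q) = ba_join (Xi T) (Xi_mor T g p) (Xi_mor T g q)"
      using pa qb ik gC by (simp add: s.Xi_join_nf t.Xi_join_nf nf gm gj)
  next
    show "Xi_mor T g (ba_zero (Xi S)) = ba_zero (Xi T)"
      by (simp add: s.Xi_zero t.Xi_zero nf gz go)
    show "Xi_mor T g (ba_one (Xi S)) = ba_one (Xi T)"
      by (simp add: s.Xi_one t.Xi_one nf go)
  qed
qed

lemma id_bsys_hom: "boolean_alg S \<Longrightarrow> bsys_hom S S id"
  unfolding bsys_hom_def boolean_alg_def Let_def by auto

lemma Xi_mor_id:
  assumes S: "bochvar_sys S" and p: "p \<in> ba_carrier (Xi S)"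
  shows "Xi_mor S id p = p"
proof -
  have SB: "boolean_alg S" using S unfolding bochvar_sys_def by auto
  obtain i a where pa: "p = (i, cls S i a)" "i \<in> bs_I S" "a \<in> bs_carrier S" using Xi_carE[OF p] by blast
  then show ?thesis using Xi_mor_nf[OF SB SB id_bsys_hom[OF SB]] bsys_I[OF S] by auto
qed

lemma Xi_mor_comp:
  assumes S: "bochvar_sys S" and T: "bochvar_sys T" and U: "bochvar_sys U"
    and g: "bsys_hom S T g" and k: "bsys_hom T U k" and p: "p \<in> ba_carrier (Xi S)"
  shows "Xi_mor U (k \<circ> g) p = Xi_mor U k (Xi_mor T g p)"
proof -
  have SB: "boolean_alg S" "boolean_alg T" "boolean_alg U" using S T U unfolding bochvar_sys_def by auto
  have kg: "bsys_hom S U (k \<circ> g)" using g k unfolding bsys_hom_def by (auto simp: image_subset_iff)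
  obtain i a where pa: "p = (i, cls S i a)" "i \<in> bs_I S" "a \<in> bs_carrier S" using Xi_carE[OF p] by blast
  have ik: "i \<in> bs_carrier S" using pa bsys_I[OF S] by auto
  have gC: "g i \<in> bs_carrier T" "g a \<in> bs_carrier T" using g pa ik unfolding bsys_hom_def by auto
  show ?thesis using pa ik gC Xi_mor_nf[OF SB(1,3) kg] Xi_mor_nf[OF SB(1,2) g] Xi_mor_nf[OF SB(2,3) k]
    by simp
qed




locale BE =
  fixes A :: "'a balg" and X :: "'i set" and e :: "'a \<Rightarrow> 'i \<Rightarrow> wk"
  assumes wf: "balg_wf A"
    and inj: "\<And>x y. x \<in> ba_carrier A \<Longrightarrow> y \<in> ba_carrier A \<Longrightarrow> (\<forall>i\<in>X. e x i = e y i) \<Longrightarrow> x = y"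
    and em: "\<And>x y i. x \<in> ba_carrier A \<Longrightarrow> y \<in> ba_carrier A \<Longrightarrow> i \<in> X \<Longrightarrow>
                e (ba_meet A x y) i = wk_meet (e x i) (e y i)"
    and ej: "\<And>x y i. x \<in> ba_carrier A \<Longrightarrow> y \<in> ba_carrier A \<Longrightarrow> i \<in> X \<Longrightarrow>
                e (ba_join A x y) i = wk_join (e x i) (e y i)"
    and en: "\<And>x i. x \<in> ba_carrier A \<Longrightarrow> i \<in> X \<Longrightarrow> e (ba_neg A x) i = wk_neg (e x i)"
    and eJ: "\<And>x i. x \<in> ba_carrier A \<Longrightarrow> i \<in> X \<Longrightarrow> e (ba_J2 A x) i = wk_J2 (e x i)"
    and ez: "\<And>i. i \<in> X \<Longrightarrow> e (ba_zero A) i = WZero"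
    and eo: "\<And>i. i \<in> X \<Longrightarrow> e (ba_one A) i = WOne"

lemma bochvar_alg_BE:
  fixes A :: "'a balg"
  assumes "bochvar_alg A"
  shows "\<exists>(X :: ('a \<Rightarrow> wk) set) e. BE A X e"
proof -
  obtain X :: "('a \<Rightarrow> wk) set" and e where H:
    "(\<forall>x\<in>ba_carrier A. \<forall>y\<in>ba_carrier A. (\<forall>i\<in>X. e x i = e y i) \<longrightarrow> x = y)"
    "(\<forall>x\<in>ba_carrier A. \<forall>y\<in>ba_carrier A. \<forall>i\<in>X.
            e (ba_meet A x y) i = wk_meet (e x i) (e y i) \<and>
            e (ba_join A x y) i = wk_join (e x i) (e y i))"
    "(\<forall>x\<in>ba_carrier A. \<forall>i\<in>X.
            e (ba_neg A x) i = wk_neg (e x i) \<and> e (ba_J2 A x) i = wk_J2 (e x i))"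
    "(\<forall>i\<in>X. e (ba_zero A) i = WZero \<and> e (ba_one A) i = WOne)"
    using assms unfolding bochvar_alg_def by blast
  have "BE A X e"
  proof (rule BE.intro)
    show "balg_wf A" using assms unfolding bochvar_alg_def by simp
  qed (use H in \<open>simp_all\<close>)
  then show ?thesis by blast
qed

context BE
begin

abbreviation "Car \<equiv> ba_carrier A"
abbreviation "mA \<equiv> ba_meet A"
abbreviation "jA \<equiv> ba_join A"
abbreviation "nA \<equiv> ba_neg A"
abbreviation "JA \<equiv> ba_J2 A"
abbreviation "zA \<equiv> ba_zero A"
abbreviation "oA \<equiv> ba_one A"

lemma clA_m[simp]: "x \<in> Car \<Longrightarrow> y \<in> Car \<Longrightarrow> mA x y \<in> Car"
  and clA_j[simp]: "x \<in> Car \<Longrightarrow> y \<in> Car \<Longrightarrow> jA x y \<in> Car"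
  and clA_n[simp]: "x \<in> Car \<Longrightarrow> nA x \<in> Car"
  and clA_J[simp]: "x \<in> Car \<Longrightarrow> JA x \<in> Car"
  and clA_z[simp]: "zA \<in> Car" and clA_o[simp]: "oA \<in> Car"
  using wf unfolding balg_wf_def by auto

lemmas esimps = em ej en eJ ez eo

lemma ext: "x \<in> Car \<Longrightarrow> y \<in> Car \<Longrightarrow> (\<And>i. i \<in> X \<Longrightarrow> e x i = e y i) \<Longrightarrow> x = y"
  using inj by blast

lemma same_fibre_iff:
  assumes "a \<in> Car" "b \<in> Car"
  shows "same_fibre A a b \<longleftrightarrow> (\<forall>i\<in>X. (e a i = WHalf) = (e b i = WHalf))"
proof
  assume sf: "same_fibre A a b"
  show "\<forall>i\<in>X. (e a i = WHalf) = (e b i = WHalf)"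
  proof
    fix i assume i: "i \<in> X"
    have "e (mA a (jA a b)) i = e a i" "e (mA b (jA b a)) i = e b i"
      using sf unfolding same_fibre_def by auto
    then have "wk_meet (e a i) (wk_join (e a i) (e b i)) = e a i"
      "wk_meet (e b i) (wk_join (e b i) (e a i)) = e b i" using assms i by (simp_all add: esimps)
    then show "(e a i = WHalf) = (e b i = WHalf)"
      by (cases "e a i"; cases "e b i"; simp add: wk_meet_def wk_join_def)
  qed
next
  assume H: "\<forall>i\<in>X. (e a i = WHalf) = (e b i = WHalf)"
  have "mA a (jA a b) = a"
  proof (rule ext)
    fix i assume i: "i \<in> X"
    have "(e a i = WHalf) = (e b i = WHalf)" using H i by blast
    then show "e (mA a (jA a b)) i = e a i" using assms i
      by (cases "e a i"; cases "e b i"; simp add: esimps wk_meet_def wk_join_def)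
  qed (use assms in auto)
  moreover have "mA b (jA b a) = b"
  proof (rule ext)
    fix i assume i: "i \<in> X"
    have "(e a i = WHalf) = (e b i = WHalf)" using H i by blast
    then show "e (mA b (jA b a)) i = e b i" using assms i
      by (cases "e a i"; cases "e b i"; simp add: esimps wk_meet_def wk_join_def)
  qed (use assms in auto)
  ultimately show "same_fibre A a b" unfolding same_fibre_def by simp
qed

lemma fibre_iff: "a \<in> Car \<Longrightarrow> b \<in> fibre A a \<longleftrightarrow> b \<in> Car \<and> (\<forall>i\<in>X. (e a i = WHalf) = (e b i = WHalf))"
  unfolding fibre_def using same_fibre_iff by auto

lemma bottom_iff: "b \<in> bottom_fibre A \<longleftrightarrow> b \<in> Car \<and> (\<forall>i\<in>X. e b i \<noteq> WHalf)"
  unfolding bottom_fibre_def using fibre_iff[of zA b] by (auto simp: ez)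

lemma bot_vals: "b \<in> bottom_fibre A \<Longrightarrow> i \<in> X \<Longrightarrow> e b i = WZero \<or> e b i = WOne"
  using bottom_iff by (cases "e b i") auto

lemma top_in_fibre: assumes a: "a \<in> Car" shows "jA a (nA a) \<in> fibre A a"
    unfolding fibre_iff[OF a]
  proof (intro conjI ballI)
    fix i assume i: "i \<in> X"
    show "(e a i = WHalf) = (e (jA a (nA a)) i = WHalf)" using a i
      by (cases "e a i"; simp add: esimps wk_join_def)
  qed (use a in simp)

lemma fibre_top_eq:
  assumes a: "a \<in> Car"
  shows "fibre_top A a = jA a (nA a)"
  unfolding fibre_top_def
proof (rule the_equality)
  show "jA a (nA a) \<in> fibre A a \<and> (\<forall>b\<in>fibre A a. mA b (jA a (nA a)) = b)"
  proof (intro conjI ballI)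
    show "jA a (nA a) \<in> fibre A a" by (rule top_in_fibre[OF a])
  next
    fix b assume "b \<in> fibre A a"
    then have b: "b \<in> Car" "\<forall>i\<in>X. (e a i = WHalf) = (e b i = WHalf)" using fibre_iff a by auto
    show "mA b (jA a (nA a)) = b"
    proof (rule ext)
      fix i assume i: "i \<in> X"
      then show "e (mA b (jA a (nA a))) i = e b i" using a b
        by (cases "e a i"; cases "e b i"; simp add: esimps wk_meet_def wk_join_def)
    qed (use a b in auto)
  qed
next
  fix t assume t: "t \<in> fibre A a \<and> (\<forall>b\<in>fibre A a. mA b t = b)"
  have tf: "jA a (nA a) \<in> fibre A a"
    unfolding fibre_iff[OF a]
  proof (intro conjI ballI)
    fix i assume i: "i \<in> X"
    show "(e a i = WHalf) = (e (jA a (nA a)) i = WHalf)" using a i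
      by (cases "e a i"; simp add: esimps wk_join_def)
  qed (use a in simp)
  have "mA (jA a (nA a)) t = jA a (nA a)" using t tf by auto
  moreover have "mA t (jA a (nA a)) = t"
  proof (rule ext)
    fix i assume i: "i \<in> X"
    have tc: "t \<in> Car" "(e a i = WHalf) = (e t i = WHalf)" using t fibre_iff a i by auto
    then show "e (mA t (jA a (nA a))) i = e t i" using a i
      by (cases "e a i"; cases "e t i"; simp add: esimps wk_meet_def wk_join_def)
  qed (use a t fibre_iff in auto)
  moreover have "mA (jA a (nA a)) t = mA t (jA a (nA a))"
    by (rule ext) (use a t fibre_iff in \<open>auto simp: esimps wk_meet_def\<close>)
  ultimately show "t = jA a (nA a)" by simp
qed

end




context BE
begin

abbreviation "Bt \<equiv> bottom_fibre A"

lemma Bt_Car: "x \<in> Bt \<Longrightarrow> x \<in> Car" using bottom_iff by auto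

lemma bvals_all: "x \<in> Bt \<Longrightarrow> \<forall>i\<in>X. e x i = WZero \<or> e x i = WOne"
  using bot_vals by auto

lemma Bt_I: "x \<in> Car \<Longrightarrow> (\<And>i. i \<in> X \<Longrightarrow> e x i \<noteq> WHalf) \<Longrightarrow> x \<in> Bt"
  using bottom_iff by auto

lemma Bt_m: "x \<in> Bt \<Longrightarrow> y \<in> Bt \<Longrightarrow> mA x y \<in> Bt"
proof (rule Bt_I)
  fix i assume "x \<in> Bt" "y \<in> Bt" "i \<in> X"
  with bot_vals[OF this(1,3)] bot_vals[OF this(2,3)] Bt_Car show "e (mA x y) i \<noteq> WHalf"
    by (elim disjE) (simp_all add: esimps wk_meet_def)
qed (simp add: Bt_Car)

lemma Bt_j: "x \<in> Bt \<Longrightarrow> y \<in> Bt \<Longrightarrow> jA x y \<in> Bt"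
proof (rule Bt_I)
  fix i assume "x \<in> Bt" "y \<in> Bt" "i \<in> X"
  with bot_vals[OF this(1,3)] bot_vals[OF this(2,3)] Bt_Car show "e (jA x y) i \<noteq> WHalf"
    by (elim disjE) (simp_all add: esimps wk_join_def)
qed (simp add: Bt_Car)

lemma Bt_n: "x \<in> Bt \<Longrightarrow> nA x \<in> Bt"
proof (rule Bt_I)
  fix i assume "x \<in> Bt" "i \<in> X"
  with bot_vals[OF this(1,2)] Bt_Car show "e (nA x) i \<noteq> WHalf"
    by (elim disjE) (simp_all add: esimps)
qed (simp add: Bt_Car)

lemma Bt_J: "x \<in> Car \<Longrightarrow> JA x \<in> Bt"
  by (rule Bt_I) (simp_all add: esimps wk_J2_def)

lemma Bt_z: "zA \<in> Bt" and Bt_o: "oA \<in> Bt"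
  by (rule Bt_I; simp add: esimps)+

lemma Bt_ext3:
  assumes x: "x \<in> Bt" and y: "y \<in> Bt" and w: "w \<in> Bt" and LR: "L \<in> Car" "R \<in> Car"
    and H: "\<And>i. i \<in> X \<Longrightarrow> x \<in> Car \<Longrightarrow> y \<in> Car \<Longrightarrow> w \<in> Car \<Longrightarrow>
       e x i = WZero \<or> e x i = WOne \<Longrightarrow> e y i = WZero \<or> e y i = WOne \<Longrightarrow>
       e w i = WZero \<or> e w i = WOne \<Longrightarrow> e L i = e R i"
  shows "L = R"
  using H bot_vals[OF x] bot_vals[OF y] bot_vals[OF w] Bt_Car[OF x] Bt_Car[OF y] Bt_Car[OF w]
  by (intro ext[OF LR]) blast

lemma Bt_comm_m:
  assumes x: "x \<in> Bt" and y: "y \<in> Bt" and w: "w \<in> Bt"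
  shows "mA x y = mA y x"
  apply (rule Bt_ext3[OF x y w])
  using Bt_Car[OF x] Bt_Car[OF y] Bt_Car[OF w]
  by (auto simp: esimps wk_meet_def wk_join_def)

lemma Bt_comm_j:
  assumes x: "x \<in> Bt" and y: "y \<in> Bt" and w: "w \<in> Bt"
  shows "jA x y = jA y x"
  apply (rule Bt_ext3[OF x y w])
  using Bt_Car[OF x] Bt_Car[OF y] Bt_Car[OF w]
  by (auto simp: esimps wk_meet_def wk_join_def)

lemma Bt_assoc_m:
  assumes x: "x \<in> Bt" and y: "y \<in> Bt" and w: "w \<in> Bt"
  shows "mA x (mA y w) = mA (mA x y) w"
  apply (rule Bt_ext3[OF x y w])
  using Bt_Car[OF x] Bt_Car[OF y] Bt_Car[OF w]
  by (auto simp: esimps wk_meet_def wk_join_def)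

lemma Bt_assoc_j:
  assumes x: "x \<in> Bt" and y: "y \<in> Bt" and w: "w \<in> Bt"
  shows "jA x (jA y w) = jA (jA x y) w"
  apply (rule Bt_ext3[OF x y w])
  using Bt_Car[OF x] Bt_Car[OF y] Bt_Car[OF w]
  by (auto simp: esimps wk_meet_def wk_join_def)

lemma Bt_abs1:
  assumes x: "x \<in> Bt" and y: "y \<in> Bt" and w: "w \<in> Bt"
  shows "mA x (jA x y) = x"
  apply (rule Bt_ext3[OF x y w])
  using Bt_Car[OF x] Bt_Car[OF y] Bt_Car[OF w]
  by (auto simp: esimps wk_meet_def wk_join_def)

lemma Bt_abs2:
  assumes x: "x \<in> Bt" and y: "y \<in> Bt" and w: "w \<in> Bt"
  shows "jA x (mA x y) = x"
  apply (rule Bt_ext3[OF x y w])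
  using Bt_Car[OF x] Bt_Car[OF y] Bt_Car[OF w]
  by (auto simp: esimps wk_meet_def wk_join_def)

lemma Bt_dist:
  assumes x: "x \<in> Bt" and y: "y \<in> Bt" and w: "w \<in> Bt"
  shows "mA x (jA y w) = jA (mA x y) (mA x w)"
  apply (rule Bt_ext3[OF x y w])
  using Bt_Car[OF x] Bt_Car[OF y] Bt_Car[OF w]
  by (auto simp: esimps wk_meet_def wk_join_def)

lemma Bt_c1:
  assumes x: "x \<in> Bt" and y: "y \<in> Bt" and w: "w \<in> Bt"
  shows "mA x (nA x) = zA"
  apply (rule Bt_ext3[OF x y w])
  using Bt_Car[OF x] Bt_Car[OF y] Bt_Car[OF w]
  by (auto simp: esimps wk_meet_def wk_join_def)

lemma Bt_c2:
  assumes x: "x \<in> Bt" and y: "y \<in> Bt" and w: "w \<in> Bt"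
  shows "jA x (nA x) = oA"
  apply (rule Bt_ext3[OF x y w])
  using Bt_Car[OF x] Bt_Car[OF y] Bt_Car[OF w]
  by (auto simp: esimps wk_meet_def wk_join_def)

lemmas Bt_ident = Bt_comm_m Bt_comm_j Bt_assoc_m Bt_assoc_j Bt_abs1 Bt_abs2 Bt_dist Bt_c1 Bt_c2

lemma Gamma_bool: "boolean_alg (Gamma A)"
  unfolding boolean_alg_def Gamma_def Let_def bsys.simps
  by (intro conjI ballI; (rule Bt_m Bt_j Bt_n Bt_z Bt_o Bt_ident; assumption)?)

lemma Gamma_I: "bs_I (Gamma A) = {JA (jA a (nA a)) | a. a \<in> Car}"
  unfolding Gamma_def bsys.simps Setcompr_eq_image using fibre_top_eq by (intro image_cong) auto

lemma Gamma_sys: "bochvar_sys (Gamma A)"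
  unfolding bochvar_sys_def
proof (intro conjI ballI)
  show "boolean_alg (Gamma A)" by (rule Gamma_bool)
  show "bs_I (Gamma A) \<subseteq> bs_carrier (Gamma A)" unfolding Gamma_I
    by (auto simp: Gamma_def Bt_J)
  have "oA = JA (jA oA (nA oA))"
    by (rule ext) (auto simp: esimps wk_join_def wk_J2_def)
  then show "bs_one (Gamma A) \<in> bs_I (Gamma A)" unfolding Gamma_I by (auto simp: Gamma_def)
next
  fix p q assume "p \<in> bs_I (Gamma A)" "q \<in> bs_I (Gamma A)"
  then obtain a b where ab: "a \<in> Car" "b \<in> Car" "p = JA (jA a (nA a))" "q = JA (jA b (nA b))"
    unfolding Gamma_I by auto
  have "mA p q = JA (jA (mA a b) (nA (mA a b)))"
  proof (rule ext)
    fix i assume i: "i \<in> X"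
    then show "e (mA p q) i = e (JA (jA (mA a b) (nA (mA a b)))) i" using ab
      by (cases "e a i"; cases "e b i"; simp add: esimps wk_meet_def wk_join_def wk_J2_def)
  qed (use ab in auto)
  then show "bs_meet (Gamma A) p q \<in> bs_I (Gamma A)" unfolding Gamma_I using ab
    by (auto simp: Gamma_def)
qed

end

lemma Gamma_sys: "bochvar_alg A \<Longrightarrow> bochvar_sys (Gamma A)"
  using bochvar_alg_BE BE.Gamma_sys by blast

lemma hom_bottom:
  assumes wf: "balg_wf A" and f: "balg_hom A C f" and b: "b \<in> bottom_fibre A"
  shows "f b \<in> bottom_fibre C"
proof -
  have bc: "b \<in> ba_carrier A" and sf: "same_fibre A (ba_zero A) b"
    using b unfolding bottom_fibre_def fibre_def by auto
  have cl: "ba_join A (ba_zero A) b \<in> ba_carrier A" "ba_join A b (ba_zero A) \<in> ba_carrier A"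
    "ba_zero A \<in> ba_carrier A"
    using wf bc unfolding balg_wf_def by auto
  have "same_fibre C (f (ba_zero A)) (f b)"
    using sf f cl bc unfolding same_fibre_def balg_hom_def by metis
  then show ?thesis using f bc unfolding bottom_fibre_def fibre_def balg_hom_def by auto
qed

lemma Gamma_mor_hom:
  fixes A :: "'a balg" and C :: "'c balg"
  assumes A: "bochvar_alg A" and C: "bochvar_alg C" and f: "balg_hom A C f"
  shows "bsys_hom (Gamma A) (Gamma C) (Gamma_mor A f)"
proof -
  obtain XA :: "('a \<Rightarrow> wk) set" and eA where a: "BE A XA eA" using bochvar_alg_BE[OF A] by blast
  obtain XC :: "('c \<Rightarrow> wk) set" and eC where c: "BE C XC eC" using bochvar_alg_BE[OF C] by blast
  have wf: "balg_wf A" using A unfolding bochvar_alg_def by simp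
  note hb = hom_bottom[OF wf f]
  have fh: "\<And>x. x \<in> ba_carrier A \<Longrightarrow> f x \<in> ba_carrier C"
    "\<And>x y. x \<in> ba_carrier A \<Longrightarrow> y \<in> ba_carrier A \<Longrightarrow> f (ba_meet A x y) = ba_meet C (f x) (f y)"
    "\<And>x y. x \<in> ba_carrier A \<Longrightarrow> y \<in> ba_carrier A \<Longrightarrow> f (ba_join A x y) = ba_join C (f x) (f y)"
    "\<And>x. x \<in> ba_carrier A \<Longrightarrow> f (ba_neg A x) = ba_neg C (f x)"
    "\<And>x. x \<in> ba_carrier A \<Longrightarrow> f (ba_J2 A x) = ba_J2 C (f x)"
    "f (ba_zero A) = ba_zero C" "f (ba_one A) = ba_one C"
    using f unfolding balg_hom_def by auto
  show ?thesis unfolding bsys_hom_def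
  proof (intro conjI ballI)
    show "Gamma_mor A f ` bs_I (Gamma A) \<subseteq> bs_I (Gamma C)"
    proof
      fix y assume "y \<in> Gamma_mor A f ` bs_I (Gamma A)"
      then obtain x where x: "x \<in> ba_carrier A" "y = Gamma_mor A f (ba_J2 A (ba_join A x (ba_neg A x)))"
        unfolding BE.Gamma_I[OF a] by auto
      have "ba_J2 A (ba_join A x (ba_neg A x)) \<in> bottom_fibre A" using BE.Bt_J[OF a] x BE.clA_j[OF a] BE.clA_n[OF a] by auto
      then have "y = ba_J2 C (ba_join C (f x) (ba_neg C (f x)))"
        using x fh unfolding Gamma_mor_def using BE.clA_j[OF a] BE.clA_n[OF a] by auto
      then show "y \<in> bs_I (Gamma C)" unfolding BE.Gamma_I[OF c] using fh x by auto
    qed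
  qed (auto simp: Gamma_def Gamma_mor_def hb BE.Bt_m[OF a] BE.Bt_j[OF a] BE.Bt_n[OF a] BE.Bt_z[OF a]
        BE.Bt_o[OF a] fh BE.Bt_Car[OF a])
qed

lemma Gamma_mor_id: "x \<in> bs_carrier (Gamma A) \<Longrightarrow> Gamma_mor A id x = x"
  by (simp add: Gamma_def Gamma_mor_def)

lemma Gamma_mor_comp:
  assumes A: "bochvar_alg A" and f: "balg_hom A C f" and x: "x \<in> bs_carrier (Gamma A)"
  shows "Gamma_mor A (h \<circ> f) x = Gamma_mor C h (Gamma_mor A f x)"
proof -
  have wf: "balg_wf A" using A unfolding bochvar_alg_def by simp
  have "x \<in> bottom_fibre A" using x by (simp add: Gamma_def)
  then show ?thesis using hom_bottom[OF wf f] by (simp add: Gamma_mor_def)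
qed




definition eta_map :: "'a balg \<Rightarrow> 'a \<Rightarrow> 'a \<times> 'a set" where
  "eta_map A x = (ba_J2 A (ba_join A x (ba_neg A x)),
     cls (Gamma A) (ba_J2 A (ba_join A x (ba_neg A x))) (ba_J2 A x))"

definition eps_map :: "'b bsys \<Rightarrow> 'b \<times> 'b set \<Rightarrow> 'b" where
  "eps_map S p = rep (snd p)"

lemma balg_isoI:
  assumes wf: "balg_wf A" and f: "balg_hom A C f" and inj: "inj_on f (ba_carrier A)"
    and surj: "ba_carrier C \<subseteq> f ` ba_carrier A"
  shows "balg_iso A C f"
proof -
  define g where "g = inv_into (ba_carrier A) f"
  have gC: "\<And>y. y \<in> ba_carrier C \<Longrightarrow> g y \<in> ba_carrier A \<and> f (g y) = y"
    unfolding g_def using surj by (auto intro: inv_into_into f_inv_into_f)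
  have gf: "\<And>x. x \<in> ba_carrier A \<Longrightarrow> g (f x) = x" unfolding g_def using inj by simp
  have cl: "\<And>x y. x \<in> ba_carrier A \<Longrightarrow> y \<in> ba_carrier A \<Longrightarrow> ba_meet A x y \<in> ba_carrier A \<and> ba_join A x y \<in> ba_carrier A"
    "\<And>x. x \<in> ba_carrier A \<Longrightarrow> ba_neg A x \<in> ba_carrier A \<and> ba_J2 A x \<in> ba_carrier A"
    "ba_zero A \<in> ba_carrier A" "ba_one A \<in> ba_carrier A"
    using wf unfolding balg_wf_def by auto
  have fh: "\<And>x y. x \<in> ba_carrier A \<Longrightarrow> y \<in> ba_carrier A \<Longrightarrow>
      f (ba_meet A x y) = ba_meet C (f x) (f y) \<and> f (ba_join A x y) = ba_join C (f x) (f y)"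
    "\<And>x. x \<in> ba_carrier A \<Longrightarrow> f (ba_neg A x) = ba_neg C (f x) \<and> f (ba_J2 A x) = ba_J2 C (f x)"
    "f (ba_zero A) = ba_zero C" "f (ba_one A) = ba_one C"
    using f unfolding balg_hom_def by auto
  have "balg_hom C A g" unfolding balg_hom_def
  proof (intro conjI ballI)
    fix y1 y2 assume y: "y1 \<in> ba_carrier C" "y2 \<in> ba_carrier C"
    show "g (ba_meet C y1 y2) = ba_meet A (g y1) (g y2)"
      using gC[OF y(1)] gC[OF y(2)] fh(1)[of "g y1" "g y2"] gf cl(1) by metis
    show "g (ba_join C y1 y2) = ba_join A (g y1) (g y2)"
      using gC[OF y(1)] gC[OF y(2)] fh(1)[of "g y1" "g y2"] gf cl(1) by metis
  next
    fix y assume y: "y \<in> ba_carrier C"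
    show "g y \<in> ba_carrier A" using gC[OF y] by simp
    show "g (ba_neg C y) = ba_neg A (g y)" using gC[OF y] fh(2)[of "g y"] gf cl(2) by metis
    show "g (ba_J2 C y) = ba_J2 A (g y)" using gC[OF y] fh(2)[of "g y"] gf cl(2) by metis
  next
    show "g (ba_zero C) = ba_zero A" using fh(3) gf cl(3) by metis
    show "g (ba_one C) = ba_one A" using fh(4) gf cl(4) by metis
  qed
  then show ?thesis unfolding balg_iso_def using f gC gf by blast
qed

lemma bsys_isoI:
  assumes wf: "boolean_alg S" and IS: "bs_I S \<subseteq> bs_carrier S" and f: "bsys_hom S T f"
    and inj: "inj_on f (bs_carrier S)"
    and surj: "bs_carrier T \<subseteq> f ` bs_carrier S" and surjI: "bs_I T \<subseteq> f ` bs_I S"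
  shows "bsys_iso S T f"
proof -
  interpret BA S by (rule BA.intro[OF wf])
  define g where "g = inv_into (bs_carrier S) f"
  have gC: "\<And>y. y \<in> bs_carrier T \<Longrightarrow> g y \<in> bs_carrier S \<and> f (g y) = y"
    unfolding g_def using surj by (auto intro: inv_into_into f_inv_into_f)
  have gf: "\<And>x. x \<in> bs_carrier S \<Longrightarrow> g (f x) = x" unfolding g_def using inj by simp
  have fh: "\<And>x y. x \<in> C \<Longrightarrow> y \<in> C \<Longrightarrow>
      f (m x y) = bs_meet T (f x) (f y) \<and> f (j x y) = bs_join T (f x) (f y)"
    "\<And>x. x \<in> C \<Longrightarrow> f (n x) = bs_neg T (f x)"
    "f z = bs_zero T" "f t = bs_one T"
    using f unfolding bsys_hom_def by auto
  have "bsys_hom T S g" unfolding bsys_hom_def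
  proof (intro conjI ballI)
    fix y1 y2 assume y: "y1 \<in> bs_carrier T" "y2 \<in> bs_carrier T"
    show "g (bs_meet T y1 y2) = m (g y1) (g y2)"
      using gC[OF y(1)] gC[OF y(2)] fh(1)[of "g y1" "g y2"] gf cl_m by metis
    show "g (bs_join T y1 y2) = j (g y1) (g y2)"
      using gC[OF y(1)] gC[OF y(2)] fh(1)[of "g y1" "g y2"] gf cl_j by metis
  next
    fix y assume y: "y \<in> bs_carrier T"
    show "g y \<in> C" using gC[OF y] by simp
    show "g (bs_neg T y) = n (g y)" using gC[OF y] fh(2)[of "g y"] gf cl_n by metis
  next
    show "g (bs_zero T) = z" using fh(3) gf cl_z by metis
    show "g (bs_one T) = t" using fh(4) gf cl_o by metis
    show "g ` bs_I T \<subseteq> bs_I S"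
    proof
      fix y assume "y \<in> g ` bs_I T"
      then obtain x where x: "x \<in> bs_I S" "y = g (f x)" using surjI by auto
      then show "y \<in> bs_I S" using gf IS by auto
    qed
  qed
  then show ?thesis unfolding bsys_iso_def using f gC gf by blast
qed

context BE
begin

lemma ix_m: assumes "x \<in> Car" and "y \<in> Car"
  shows "JA (jA (mA x y) (nA (mA x y))) = mA (JA (jA x (nA x))) (JA (jA y (nA y)))"
proof (rule ext)
  fix i assume i: "i \<in> X"
  show "e (JA (jA (mA x y) (nA (mA x y)))) i = e (mA (JA (jA x (nA x))) (JA (jA y (nA y)))) i" using i assms
    by (cases "e x i"; cases "e y i"; simp add: esimps wk_meet_def wk_join_def wk_J2_def)
qed (use assms in simp_all)

lemma ix_j: assumes "x \<in> Car" and "y \<in> Car"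
  shows "JA (jA (jA x y) (nA (jA x y))) = mA (JA (jA x (nA x))) (JA (jA y (nA y)))"
proof (rule ext)
  fix i assume i: "i \<in> X"
  show "e (JA (jA (jA x y) (nA (jA x y)))) i = e (mA (JA (jA x (nA x))) (JA (jA y (nA y)))) i" using i assms
    by (cases "e x i"; cases "e y i"; simp add: esimps wk_meet_def wk_join_def wk_J2_def)
qed (use assms in simp_all)

lemma ix_n: assumes "x \<in> Car"
  shows "JA (jA (nA x) (nA (nA x))) = JA (jA x (nA x))"
proof (rule ext)
  fix i assume i: "i \<in> X"
  show "e (JA (jA (nA x) (nA (nA x)))) i = e (JA (jA x (nA x))) i" using i assms
    by (cases "e x i"; simp add: esimps wk_meet_def wk_join_def wk_J2_def)
qed (use assms in simp_all)

lemma ix_J: assumes "x \<in> Car"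
  shows "JA (jA (JA x) (nA (JA x))) = oA"
proof (rule ext)
  fix i assume i: "i \<in> X"
  show "e (JA (jA (JA x) (nA (JA x)))) i = e (oA) i" using i assms
    by (cases "e x i"; simp add: esimps wk_meet_def wk_join_def wk_J2_def)
qed (use assms in simp_all)

lemma ix_z:
  shows "JA (jA zA (nA zA)) = oA"
proof (rule ext)
  fix i assume i: "i \<in> X"
  show "e (JA (jA zA (nA zA))) i = e (oA) i" using i 
    by (simp add: esimps wk_meet_def wk_join_def wk_J2_def)
qed simp_all

lemma ix_o:
  shows "JA (jA oA (nA oA)) = oA"
proof (rule ext)
  fix i assume i: "i \<in> X"
  show "e (JA (jA oA (nA oA))) i = e (oA) i" using i 
    by (simp add: esimps wk_meet_def wk_join_def wk_J2_def)
qed simp_all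

lemma J_m: assumes "x \<in> Car" and "y \<in> Car"
  shows "JA (mA x y) = mA (JA x) (JA y)"
proof (rule ext)
  fix i assume i: "i \<in> X"
  show "e (JA (mA x y)) i = e (mA (JA x) (JA y)) i" using i assms
    by (cases "e x i"; cases "e y i"; simp add: esimps wk_meet_def wk_join_def wk_J2_def)
qed (use assms in simp_all)

lemma J_j: assumes "x \<in> Car" and "y \<in> Car"
  shows "mA (JA (jA x y)) (mA (JA (jA x (nA x))) (JA (jA y (nA y)))) = mA (jA (JA x) (JA y)) (mA (JA (jA x (nA x))) (JA (jA y (nA y))))"
proof (rule ext)
  fix i assume i: "i \<in> X"
  show "e (mA (JA (jA x y)) (mA (JA (jA x (nA x))) (JA (jA y (nA y))))) i = e (mA (jA (JA x) (JA y)) (mA (JA (jA x (nA x))) (JA (jA y (nA y))))) i" using i assms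
    by (cases "e x i"; cases "e y i"; simp add: esimps wk_meet_def wk_join_def wk_J2_def)
qed (use assms in simp_all)

lemma J_n: assumes "x \<in> Car"
  shows "mA (JA (nA x)) (JA (jA x (nA x))) = mA (nA (JA x)) (JA (jA x (nA x)))"
proof (rule ext)
  fix i assume i: "i \<in> X"
  show "e (mA (JA (nA x)) (JA (jA x (nA x)))) i = e (mA (nA (JA x)) (JA (jA x (nA x)))) i" using i assms
    by (cases "e x i"; simp add: esimps wk_meet_def wk_join_def wk_J2_def)
qed (use assms in simp_all)

lemma J_J: assumes "x \<in> Car"
  shows "JA (JA x) = JA x"
proof (rule ext)
  fix i assume i: "i \<in> X"
  show "e (JA (JA x)) i = e (JA x) i" using i assms
    by (cases "e x i"; simp add: esimps wk_meet_def wk_join_def wk_J2_def)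
qed (use assms in simp_all)

lemma J_J2: assumes "x \<in> Car"
  shows "JA x = mA (JA x) (JA (jA x (nA x)))"
proof (rule ext)
  fix i assume i: "i \<in> X"
  show "e (JA x) i = e (mA (JA x) (JA (jA x (nA x)))) i" using i assms
    by (cases "e x i"; simp add: esimps wk_meet_def wk_join_def wk_J2_def)
qed (use assms in simp_all)

lemma J_z:
  shows "JA zA = zA"
proof (rule ext)
  fix i assume i: "i \<in> X"
  show "e (JA zA) i = e (zA) i" using i 
    by (simp add: esimps wk_meet_def wk_join_def wk_J2_def)
qed simp_all

lemma J_o:
  shows "JA oA = oA"
proof (rule ext)
  fix i assume i: "i \<in> X"
  show "e (JA oA) i = e (oA) i" using i 
    by (simp add: esimps wk_meet_def wk_join_def wk_J2_def)
qed simp_all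


lemma eta_inj:
  assumes x: "x \<in> Car" and y: "y \<in> Car" and E1: "JA (jA x (nA x)) = JA (jA y (nA y))"
    and E2: "mA (JA x) (JA (jA x (nA x))) = mA (JA y) (JA (jA x (nA x)))"
  shows "x = y"
proof (rule ext[OF x y])
  fix i assume i: "i \<in> X"
  have "e (JA (jA x (nA x))) i = e (JA (jA y (nA y))) i"
       "e (mA (JA x) (JA (jA x (nA x)))) i = e (mA (JA y) (JA (jA x (nA x)))) i"
    using E1 E2 by simp_all
  then show "e x i = e y i" using i x y
    by (cases "e x i"; cases "e y i"; simp add: esimps wk_meet_def wk_join_def wk_J2_def)
qed

lemma eta_surj1:
  assumes a: "a \<in> Bt" and c: "c \<in> Car"
  shows "JA (jA (jA a (mA c (nA c))) (nA (jA a (mA c (nA c))))) = JA (jA c (nA c))"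
proof (rule ext)
  fix i assume i: "i \<in> X"
  show "e (JA (jA (jA a (mA c (nA c))) (nA (jA a (mA c (nA c)))))) i = e (JA (jA c (nA c))) i"
    using i c Bt_Car[OF a] bot_vals[OF a i]
    by (cases "e c i"; elim disjE; simp add: esimps wk_meet_def wk_join_def wk_J2_def)
qed (use a c Bt_Car in simp_all)

lemma eta_surj2:
  assumes a: "a \<in> Bt" and c: "c \<in> Car"
  shows "mA (JA (jA a (mA c (nA c)))) (JA (jA c (nA c))) = mA a (JA (jA c (nA c)))"
proof (rule ext)
  fix i assume i: "i \<in> X"
  show "e (mA (JA (jA a (mA c (nA c)))) (JA (jA c (nA c)))) i = e (mA a (JA (jA c (nA c)))) i"
    using i c Bt_Car[OF a] bot_vals[OF a i]
    by (cases "e c i"; elim disjE; simp add: esimps wk_meet_def wk_join_def wk_J2_def)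
qed (use a c Bt_Car in simp_all)

lemma Gsel: "bs_carrier (Gamma A) = Bt" "bs_meet (Gamma A) = mA" "bs_join (Gamma A) = jA"
  "bs_neg (Gamma A) = nA" "bs_zero (Gamma A) = zA" "bs_one (Gamma A) = oA"
  by (simp_all add: Gamma_def)

lemma eta_iso: "balg_iso A (Xi (Gamma A)) (eta_map A)"
proof -
  interpret G: BA "Gamma A" by (rule BA.intro[OF Gamma_bool])
  have ixI: "\<And>x. x \<in> Car \<Longrightarrow> JA (jA x (nA x)) \<in> bs_I (Gamma A)" unfolding Gamma_I by auto
  have ixB: "\<And>x. x \<in> Car \<Longrightarrow> JA (jA x (nA x)) \<in> Bt" by (simp add: Bt_J)
  have JB: "\<And>x. x \<in> Car \<Longrightarrow> JA x \<in> Bt" by (simp add: Bt_J)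
  note GC = G.cls_eq_meet[unfolded Gsel]
  have hom: "balg_hom A (Xi (Gamma A)) (eta_map A)"
    unfolding balg_hom_def
  proof (intro conjI ballI)
    fix x assume x: "x \<in> Car"
    show "eta_map A x \<in> ba_carrier (Xi (Gamma A))"
      unfolding eta_map_def using x ixI JB by (intro Xi_carI) (auto simp: Gsel)
    show "eta_map A (nA x) = ba_neg (Xi (Gamma A)) (eta_map A x)"
      unfolding eta_map_def using x ixB JB
      by (simp add: G.Xi_neg_nf[unfolded Gsel] ix_n GC Bt_n J_n)
    show "eta_map A (JA x) = ba_J2 (Xi (Gamma A)) (eta_map A x)"
      unfolding eta_map_def using x ixB JB
      by (simp add: G.Xi_J2_nf[unfolded Gsel] ix_J J_J J_J2[symmetric])
  next
    fix x y assume x: "x \<in> Car" and y: "y \<in> Car"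
    show "eta_map A (mA x y) = ba_meet (Xi (Gamma A)) (eta_map A x) (eta_map A y)"
      unfolding eta_map_def using x y ixB JB
      by (simp add: G.Xi_meet_nf[unfolded Gsel] ix_m J_m)
    show "eta_map A (jA x y) = ba_join (Xi (Gamma A)) (eta_map A x) (eta_map A y)"
      unfolding eta_map_def using x y ixB JB
      by (simp add: G.Xi_join_nf[unfolded Gsel] ix_j GC Bt_m Bt_j J_j)
  next
    show "eta_map A zA = ba_zero (Xi (Gamma A))"
      unfolding eta_map_def by (simp add: G.Xi_zero[unfolded Gsel] ix_z J_z)
    show "eta_map A oA = ba_one (Xi (Gamma A))"
      unfolding eta_map_def by (simp add: G.Xi_one[unfolded Gsel] ix_o J_o)
  qed
  have inj: "inj_on (eta_map A) Car"
  proof (rule inj_onI)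
    fix x y assume x: "x \<in> Car" and y: "y \<in> Car" and E: "eta_map A x = eta_map A y"
    have E1: "JA (jA x (nA x)) = JA (jA y (nA y))"
      and E2': "cls (Gamma A) (JA (jA x (nA x))) (JA x) = cls (Gamma A) (JA (jA y (nA y))) (JA y)"
      using E unfolding eta_map_def prod.inject by blast+
    have E2: "cls (Gamma A) (JA (jA x (nA x))) (JA x) = cls (Gamma A) (JA (jA x (nA x))) (JA y)"
      using E2' unfolding E1[symmetric] .
    have "mA (JA x) (JA (jA x (nA x))) = mA (JA y) (JA (jA x (nA x)))"
      using E2 GC[of "JA (jA x (nA x))" "JA x" "JA y"] x y ixB JB by simp
    then show "x = y" using eta_inj x y E1 by blast
  qed
  have surj: "ba_carrier (Xi (Gamma A)) \<subseteq> eta_map A ` Car"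
  proof
    fix p assume "p \<in> ba_carrier (Xi (Gamma A))"
    then obtain i a where p: "p = (i, cls (Gamma A) i a)" "i \<in> bs_I (Gamma A)" "a \<in> Bt"
      by (auto elim: Xi_carE simp: Gsel)
    then obtain c where c: "c \<in> Car" "i = JA (jA c (nA c))" unfolding Gamma_I by auto
    define x where "x = jA a (mA c (nA c))"
    have xc: "x \<in> Car" unfolding x_def using c p Bt_Car by simp
    have "eta_map A x = p"
      unfolding eta_map_def p(1) c(2) eta_surj1[OF p(3) c(1), folded x_def]
      using GC[of "JA (jA c (nA c))" "JA x" a] eta_surj2[OF p(3) c(1), folded x_def] c xc p ixB JB
      by simp
    then show "p \<in> eta_map A ` Car" using xc by blast
  qed
  show ?thesis by (rule balg_isoI[OF wf hom inj surj])
qed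

end

lemma eta_iso:
  fixes A :: "'a balg"
  assumes "bochvar_alg A" shows "balg_iso A (Xi (Gamma A)) (eta_map A)"
proof -
  obtain X :: "('a \<Rightarrow> wk) set" and e where "BE A X e" using bochvar_alg_BE[OF assms] by blast
  then show ?thesis by (rule BE.eta_iso)
qed




lemma unit_sq:
  fixes A :: "'a balg" and C :: "'c balg"
  assumes A: "bochvar_alg A" and C: "bochvar_alg C" and f: "balg_hom A C f"
  shows "unit_square (eta_map A) (eta_map C) A C f"
  unfolding unit_square_def
proof
  fix x assume x: "x \<in> ba_carrier A"
  obtain XA :: "('a \<Rightarrow> wk) set" and eA where a: "BE A XA eA" using bochvar_alg_BE[OF A] by blast
  obtain XC :: "('c \<Rightarrow> wk) set" and eC where c: "BE C XC eC" using bochvar_alg_BE[OF C] by blast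
  have gA: "boolean_alg (Gamma A)" by (rule BE.Gamma_bool[OF a])
  have gC: "boolean_alg (Gamma C)" by (rule BE.Gamma_bool[OF c])
  note nf = Xi_mor_nf[OF gA gC Gamma_mor_hom[OF A C f]]
  let ?i = "ba_J2 A (ba_join A x (ba_neg A x))"
  have iB: "?i \<in> bottom_fibre A" "ba_J2 A x \<in> bottom_fibre A"
    using BE.Bt_J[OF a] BE.clA_j[OF a] BE.clA_n[OF a] x by auto
  have fh: "f ?i = ba_J2 C (ba_join C (f x) (ba_neg C (f x)))" "f (ba_J2 A x) = ba_J2 C (f x)"
    using f x BE.clA_j[OF a] BE.clA_n[OF a] unfolding balg_hom_def by auto
  show "Xi_mor (Gamma C) (Gamma_mor A f) (eta_map A x) = eta_map C (f x)"
    unfolding eta_map_def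
    using nf[of ?i "ba_J2 A x"] iB fh by (simp add: BE.Gsel[OF a] Gamma_mor_def)
qed

lemma Xi_BE:
  assumes bs: "bochvar_sys S"
  shows "BE (Xi S) (bhoms S) (\<lambda>p h. phi h p)"
  using Xi_emb[OF bs] Xi_wf[OF bs] unfolding BE_def by auto

context BA
begin

lemma idem_t: "m t t = t" by (simp add: idem)

end

lemma Xi_bottom:
  assumes bs: "bochvar_sys S"
  shows "bottom_fibre (Xi S) = {(bs_one S, cls S (bs_one S) a) | a. a \<in> bs_carrier S}"
proof -
  interpret BA S by (rule bsys_BA[OF bs])
  interpret X: BE "Xi S" "bhoms S" "\<lambda>p h. phi h p" by (rule Xi_BE[OF bs])
  have IC: "bs_I S \<subseteq> C" by (rule bsys_I[OF bs])
  show ?thesis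
  proof (rule set_eqI)
    fix p
    show "p \<in> bottom_fibre (Xi S) \<longleftrightarrow> p \<in> {(t, cls S t a) | a. a \<in> C}"
    proof
      assume "p \<in> bottom_fibre (Xi S)"
      then have p: "p \<in> ba_carrier (Xi S)" "\<forall>h\<in>bhoms S. phi h p \<noteq> WHalf" using X.bottom_iff by auto
      obtain i a where pa: "p = (i, cls S i a)" "i \<in> bs_I S" "a \<in> C" using Xi_carE[OF p(1)] by blast
      have iC: "i \<in> C" using pa IC by auto
      have "i = t"
      proof (rule sep)
        fix h assume h: "h \<in> bhoms S"
        then have "phi h p \<noteq> WHalf" using p by auto
        then show "h i = h t" using phi_nf[OF iC pa(3) h] pa h by (auto simp: bh split: if_splits)
      qed (use iC in auto)
      then show "p \<in> {(t, cls S t a) | a. a \<in> C}" using pa by auto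
    next
      assume "p \<in> {(t, cls S t a) | a. a \<in> C}"
      then obtain a where pa: "p = (t, cls S t a)" "a \<in> C" by auto
      have "p \<in> ba_carrier (Xi S)" using pa Xi_carI bsys_tI[OF bs] by metis
      moreover have "\<forall>h\<in>bhoms S. phi h p \<noteq> WHalf" using pa phi_nf[of t a] by (auto simp: bh)
      ultimately show "p \<in> bottom_fibre (Xi S)" using X.bottom_iff by auto
    qed
  qed
qed

lemma Xi_GI:
  assumes bs: "bochvar_sys S"
  shows "bs_I (Gamma (Xi S)) = {(bs_one S, cls S (bs_one S) i) | i. i \<in> bs_I S}"
proof -
  interpret BA S by (rule bsys_BA[OF bs])
  interpret X: BE "Xi S" "bhoms S" "\<lambda>p h. phi h p" by (rule Xi_BE[OF bs])
  have IC: "bs_I S \<subseteq> C" by (rule bsys_I[OF bs])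
  have key: "ba_J2 (Xi S) (ba_join (Xi S) (i, cls S i a) (ba_neg (Xi S) (i, cls S i a))) = (t, cls S t i)"
    if "i \<in> C" "a \<in> C" for i a
  proof -
    have "m (j a (n a)) (m i i) = i" using that by (simp add: compl2 idem comm_m m_one)
    then show ?thesis using that by (simp add: Xi_neg_nf Xi_join_nf Xi_J2_nf)
  qed
  show ?thesis
  proof (rule set_eqI)
    fix q
    show "q \<in> bs_I (Gamma (Xi S)) \<longleftrightarrow> q \<in> {(t, cls S t i) | i. i \<in> bs_I S}"
    proof
      assume "q \<in> bs_I (Gamma (Xi S))"
      then obtain p where p: "p \<in> ba_carrier (Xi S)"
        "q = ba_J2 (Xi S) (ba_join (Xi S) p (ba_neg (Xi S) p))" unfolding X.Gamma_I by auto
      obtain i a where pa: "p = (i, cls S i a)" "i \<in> bs_I S" "a \<in> C" using Xi_carE[OF p(1)] by blast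
      then show "q \<in> {(t, cls S t i) | i. i \<in> bs_I S}" using key[of i a] p IC by auto
    next
      assume "q \<in> {(t, cls S t i) | i. i \<in> bs_I S}"
      then obtain i where q: "q = (t, cls S t i)" "i \<in> bs_I S" by auto
      have "(i, cls S i z) \<in> ba_carrier (Xi S)" using q Xi_carI by (metis cl_z)
      moreover have "q = ba_J2 (Xi S) (ba_join (Xi S) (i, cls S i z) (ba_neg (Xi S) (i, cls S i z)))"
        using key[of i z] q IC by auto
      ultimately show "q \<in> bs_I (Gamma (Xi S))" unfolding X.Gamma_I by blast
    qed
  qed
qed

lemma eps_iso:
  assumes bs: "bochvar_sys S"
  shows "bsys_iso (Gamma (Xi S)) S (eps_map S)"
proof -
  interpret BA S by (rule bsys_BA[OF bs])
  interpret X: BE "Xi S" "bhoms S" "\<lambda>p h. phi h p" by (rule Xi_BE[OF bs])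
  have IC: "bs_I S \<subseteq> C" by (rule bsys_I[OF bs])
  have car: "bs_carrier (Gamma (Xi S)) = {(t, cls S t a) | a. a \<in> C}"
    using Xi_bottom[OF bs] by (simp add: Gamma_def)
  have ep: "\<And>a. a \<in> C \<Longrightarrow> eps_map S (t, cls S t a) = a"
    by (simp add: eps_map_def cls_one rep_single)
  have hom: "bsys_hom (Gamma (Xi S)) S (eps_map S)"
    unfolding bsys_hom_def
  proof (intro conjI ballI)
    fix p assume "p \<in> bs_carrier (Gamma (Xi S))"
    then obtain a where pa: "p = (t, cls S t a)" "a \<in> C" using car by auto
    show "eps_map S p \<in> C" using pa ep by simp
    show "eps_map S (bs_neg (Gamma (Xi S)) p) = n (eps_map S p)"
      using pa ep by (simp add: Gamma_def Xi_neg_nf)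
  next
    fix p q assume "p \<in> bs_carrier (Gamma (Xi S))" "q \<in> bs_carrier (Gamma (Xi S))"
    then obtain a b where pa: "p = (t, cls S t a)" "a \<in> C" and qb: "q = (t, cls S t b)" "b \<in> C"
      using car by auto
    show "eps_map S (bs_meet (Gamma (Xi S)) p q) = m (eps_map S p) (eps_map S q)"
      using pa qb ep by (simp add: Gamma_def Xi_meet_nf idem_t)
    show "eps_map S (bs_join (Gamma (Xi S)) p q) = j (eps_map S p) (eps_map S q)"
      using pa qb ep by (simp add: Gamma_def Xi_join_nf idem_t)
  next
    show "eps_map S (bs_zero (Gamma (Xi S))) = z" using ep by (simp add: Gamma_def Xi_zero)
    show "eps_map S (bs_one (Gamma (Xi S))) = t" using ep by (simp add: Gamma_def Xi_one)
    show "eps_map S ` bs_I (Gamma (Xi S)) \<subseteq> bs_I S"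
      unfolding Xi_GI[OF bs] using ep IC by auto
  qed
  have inj: "inj_on (eps_map S) (bs_carrier (Gamma (Xi S)))"
    unfolding car by (rule inj_onI) (auto simp: ep)
  have surj: "C \<subseteq> eps_map S ` bs_carrier (Gamma (Xi S))"
  proof
    fix a assume "a \<in> C"
    then show "a \<in> eps_map S ` bs_carrier (Gamma (Xi S))" unfolding car using ep by force
  qed
  have surjI: "bs_I S \<subseteq> eps_map S ` bs_I (Gamma (Xi S))"
  proof
    fix a assume "a \<in> bs_I S"
    then show "a \<in> eps_map S ` bs_I (Gamma (Xi S))" unfolding Xi_GI[OF bs] using ep IC by force
  qed
  have GS: "bochvar_sys (Gamma (Xi S))" by (rule X.Gamma_sys)
  show ?thesis
    by (rule bsys_isoI[OF _ _ hom inj surj surjI]) (use GS in \<open>auto simp: bochvar_sys_def\<close>)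
qed

lemma counit_sq:
  assumes S: "bochvar_sys S" and T: "bochvar_sys T" and g: "bsys_hom S T g"
  shows "counit_square (eps_map S) (eps_map T) S T g"
  unfolding counit_square_def
proof
  fix p assume p: "p \<in> bs_carrier (Gamma (Xi S))"
  interpret s: BA S by (rule bsys_BA[OF S])
  interpret t: BA T by (rule bsys_BA[OF T])
  have SB: "boolean_alg S" "boolean_alg T" using S T unfolding bochvar_sys_def by auto
  obtain a where pa: "p = (bs_one S, cls S (bs_one S) a)" "a \<in> bs_carrier S"
    using p Xi_bottom[OF S] by (auto simp: Gamma_def)
  have pb: "p \<in> bottom_fibre (Xi S)" using p by (simp add: Gamma_def)
  have ga: "g a \<in> bs_carrier T" "g (bs_one S) = bs_one T" using g pa unfolding bsys_hom_def by auto
  show "g (eps_map S p) = eps_map T (Gamma_mor (Xi S) (Xi_mor T g) p)"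
    using pa pb ga Xi_mor_nf[OF SB g, of "bs_one S" a]
    by (simp add: Gamma_mor_def eps_map_def s.cls_one t.cls_one s.rep_single)
qed



theorem theorem3p9:
  shows
  \<comment> \<open>Gamma is a functor from Bochvar algebras to Bochvar systems\<close>
  "(\<forall>A :: 'a balg. bochvar_alg A \<longrightarrow> bochvar_sys (Gamma A)) \<and>
   (\<forall>(A :: 'a balg) (C :: 'c balg) f. bochvar_alg A \<and> bochvar_alg C \<and> balg_hom A C f \<longrightarrow>
        bsys_hom (Gamma A) (Gamma C) (Gamma_mor A f)) \<and>
   (\<forall>A :: 'a balg. bochvar_alg A \<longrightarrow> (\<forall>x\<in>bs_carrier (Gamma A). Gamma_mor A id x = x)) \<and>
   (\<forall>(A :: 'a balg) (C :: 'c balg) (D :: 'a balg) f h.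
        bochvar_alg A \<and> bochvar_alg C \<and> bochvar_alg D \<and> balg_hom A C f \<and> balg_hom C D h \<longrightarrow>
        (\<forall>x\<in>bs_carrier (Gamma A). Gamma_mor A (h \<circ> f) x = Gamma_mor C h (Gamma_mor A f x))) \<and>
  \<comment> \<open>Xi is a functor from Bochvar systems to Bochvar algebras\<close>
   (\<forall>S :: 'b bsys. bochvar_sys S \<longrightarrow> bochvar_alg (Xi S)) \<and>
   (\<forall>(S :: 'b bsys) (T :: 'd bsys) g. bochvar_sys S \<and> bochvar_sys T \<and> bsys_hom S T g \<longrightarrow>
        balg_hom (Xi S) (Xi T) (Xi_mor T g)) \<and>
   (\<forall>S :: 'b bsys. bochvar_sys S \<longrightarrow> (\<forall>p\<in>ba_carrier (Xi S). Xi_mor S id p = p)) \<and>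
   (\<forall>(S :: 'b bsys) (T :: 'd bsys) (U :: 'b bsys) g k.
        bochvar_sys S \<and> bochvar_sys T \<and> bochvar_sys U \<and> bsys_hom S T g \<and> bsys_hom T U k \<longrightarrow>
        (\<forall>p\<in>ba_carrier (Xi S). Xi_mor U (k \<circ> g) p = Xi_mor U k (Xi_mor T g p))) \<and>
  \<comment> \<open>natural isomorphism eta : Id \<Rightarrow> Xi o Gamma\<close>
   (\<exists>(etaA :: 'a balg \<Rightarrow> 'a \<Rightarrow> 'a \<times> 'a set) (etaC :: 'c balg \<Rightarrow> 'c \<Rightarrow> 'c \<times> 'c set).
      (\<forall>A. bochvar_alg A \<longrightarrow> balg_iso A (Xi (Gamma A)) (etaA A)) \<and>
      (\<forall>C. bochvar_alg C \<longrightarrow> balg_iso C (Xi (Gamma C)) (etaC C)) \<and>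
      (\<forall>A A' f. bochvar_alg A \<and> bochvar_alg A' \<and> balg_hom A A' f \<longrightarrow>
          unit_square (etaA A) (etaA A') A A' f) \<and>
      (\<forall>A C f. bochvar_alg A \<and> bochvar_alg C \<and> balg_hom A C f \<longrightarrow>
          unit_square (etaA A) (etaC C) A C f) \<and>
      (\<forall>C A f. bochvar_alg C \<and> bochvar_alg A \<and> balg_hom C A f \<longrightarrow>
          unit_square (etaC C) (etaA A) C A f) \<and>
      (\<forall>C C' f. bochvar_alg C \<and> bochvar_alg C' \<and> balg_hom C C' f \<longrightarrow>
          unit_square (etaC C) (etaC C') C C' f)) \<and>
  \<comment> \<open>natural isomorphism eps : Gamma o Xi \<Rightarrow> Id\<close>
   (\<exists>(epsB :: 'b bsys \<Rightarrow> 'b \<times> 'b set \<Rightarrow> 'b) (epsD :: 'd bsys \<Rightarrow> 'd \<times> 'd set \<Rightarrow> 'd).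
      (\<forall>S. bochvar_sys S \<longrightarrow> bsys_iso (Gamma (Xi S)) S (epsB S)) \<and>
      (\<forall>T. bochvar_sys T \<longrightarrow> bsys_iso (Gamma (Xi T)) T (epsD T)) \<and>
      (\<forall>S S' g. bochvar_sys S \<and> bochvar_sys S' \<and> bsys_hom S S' g \<longrightarrow>
          counit_square (epsB S) (epsB S') S S' g) \<and>
      (\<forall>S T g. bochvar_sys S \<and> bochvar_sys T \<and> bsys_hom S T g \<longrightarrow>
          counit_square (epsB S) (epsD T) S T g) \<and>
      (\<forall>T S g. bochvar_sys T \<and> bochvar_sys S \<and> bsys_hom T S g \<longrightarrow>
          counit_square (epsD T) (epsB S) T S g) \<and>
      (\<forall>T T' g. bochvar_sys T \<and> bochvar_sys T' \<and> bsys_hom T T' g \<longrightarrow>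
          counit_square (epsD T) (epsD T') T T' g))"
proof (intro conjI)
  show "\<forall>A :: 'a balg. bochvar_alg A \<longrightarrow> bochvar_sys (Gamma A)" using Gamma_sys by blast
  show "\<forall>(A :: 'a balg) (C :: 'c balg) f. bochvar_alg A \<and> bochvar_alg C \<and> balg_hom A C f \<longrightarrow>
        bsys_hom (Gamma A) (Gamma C) (Gamma_mor A f)" using Gamma_mor_hom by blast
  show "\<forall>A :: 'a balg. bochvar_alg A \<longrightarrow> (\<forall>x\<in>bs_carrier (Gamma A). Gamma_mor A id x = x)"
    by (simp add: Gamma_mor_id)
  show "\<forall>(A :: 'a balg) (C :: 'c balg) (D :: 'a balg) f h.
        bochvar_alg A \<and> bochvar_alg C \<and> bochvar_alg D \<and> balg_hom A C f \<and> balg_hom C D h \<longrightarrow>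
        (\<forall>x\<in>bs_carrier (Gamma A). Gamma_mor A (h \<circ> f) x = Gamma_mor C h (Gamma_mor A f x))"
    by (auto simp: Gamma_mor_comp)
  show "\<forall>S :: 'b bsys. bochvar_sys S \<longrightarrow> bochvar_alg (Xi S)" using Xi_bochvar by blast
  show "\<forall>(S :: 'b bsys) (T :: 'd bsys) g. bochvar_sys S \<and> bochvar_sys T \<and> bsys_hom S T g \<longrightarrow>
        balg_hom (Xi S) (Xi T) (Xi_mor T g)" using Xi_mor_hom by blast
  show "\<forall>S :: 'b bsys. bochvar_sys S \<longrightarrow> (\<forall>p\<in>ba_carrier (Xi S). Xi_mor S id p = p)"
    by (auto simp: Xi_mor_id)
  show "\<forall>(S :: 'b bsys) (T :: 'd bsys) (U :: 'b bsys) g k.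
        bochvar_sys S \<and> bochvar_sys T \<and> bochvar_sys U \<and> bsys_hom S T g \<and> bsys_hom T U k \<longrightarrow>
        (\<forall>p\<in>ba_carrier (Xi S). Xi_mor U (k \<circ> g) p = Xi_mor U k (Xi_mor T g p))"
    by (auto simp: Xi_mor_comp)
next
  show "\<exists>(etaA :: 'a balg \<Rightarrow> 'a \<Rightarrow> 'a \<times> 'a set) (etaC :: 'c balg \<Rightarrow> 'c \<Rightarrow> 'c \<times> 'c set).
      (\<forall>A. bochvar_alg A \<longrightarrow> balg_iso A (Xi (Gamma A)) (etaA A)) \<and>
      (\<forall>C. bochvar_alg C \<longrightarrow> balg_iso C (Xi (Gamma C)) (etaC C)) \<and>
      (\<forall>A A' f. bochvar_alg A \<and> bochvar_alg A' \<and> balg_hom A A' f \<longrightarrow>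
          unit_square (etaA A) (etaA A') A A' f) \<and>
      (\<forall>A C f. bochvar_alg A \<and> bochvar_alg C \<and> balg_hom A C f \<longrightarrow>
          unit_square (etaA A) (etaC C) A C f) \<and>
      (\<forall>C A f. bochvar_alg C \<and> bochvar_alg A \<and> balg_hom C A f \<longrightarrow>
          unit_square (etaC C) (etaA A) C A f) \<and>
      (\<forall>C C' f. bochvar_alg C \<and> bochvar_alg C' \<and> balg_hom C C' f \<longrightarrow>
          unit_square (etaC C) (etaC C') C C' f)"
    by (rule exI[of _ eta_map], rule exI[of _ eta_map]) (simp add: eta_iso unit_sq)
next
  show "\<exists>(epsB :: 'b bsys \<Rightarrow> 'b \<times> 'b set \<Rightarrow> 'b) (epsD :: 'd bsys \<Rightarrow> 'd \<times> 'd set \<Rightarrow> 'd).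
      (\<forall>S. bochvar_sys S \<longrightarrow> bsys_iso (Gamma (Xi S)) S (epsB S)) \<and>
      (\<forall>T. bochvar_sys T \<longrightarrow> bsys_iso (Gamma (Xi T)) T (epsD T)) \<and>
      (\<forall>S S' g. bochvar_sys S \<and> bochvar_sys S' \<and> bsys_hom S S' g \<longrightarrow>
          counit_square (epsB S) (epsB S') S S' g) \<and>
      (\<forall>S T g. bochvar_sys S \<and> bochvar_sys T \<and> bsys_hom S T g \<longrightarrow>
          counit_square (epsB S) (epsD T) S T g) \<and>
      (\<forall>T S g. bochvar_sys T \<and> bochvar_sys S \<and> bsys_hom T S g \<longrightarrow>
          counit_square (epsD T) (epsB S) T S g) \<and>
      (\<forall>T T' g. bochvar_sys T \<and> bochvar_sys T' \<and> bsys_hom T T' g \<longrightarrow>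
          counit_square (epsD T) (epsD T') T T' g)"
    by (rule exI[of _ eps_map], rule exI[of _ eps_map]) (simp add: eps_iso counit_sq)
qed

end
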